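(* Let $(A,[\cdot,\cdot],\circ)$ be a Malcev-Poisson algebra and let $\Delta,\delta:A\to A\otimes A$ be linear maps whose duals $\Delta^*,\delta^*$ define a Malcev-Poisson algebra structure on $A^*$ (product $\xi\circ_{A^*}\eta=\Delta^*(\xi\otimes\eta)$, bracket $[\xi,\eta]^*=\delta^*(\xi\otimes\eta)$). Then the following are equivalent: (1) $(A,[\cdot,\cdot],\circ,\Delta,\delta)$ is a Malcev-Poisson bialgebra; (2) $(A,A^*,\mathrm{ad}_A^*,-L^*,\mathrm{ad}_{A^*}^*,-\mathcal{L}_{A^*}^* )$ is a matched pair of Malcev-Poisson algebras; (3) $(A\oplus A^*,A,A^* )$ is a standard Manin triple of Malcev-Poisson algebras with respect to $\omega_d(x+\xi,y+\eta)=\langle x,\eta\rangle+\langle\xi,y\rangle$.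
   Context: All spaces finite-dimensional over an algebraically closed field of characteristic $0$. Malcev algebra: antisymmetric bracket with $J(x,y,[x,z])=[J(x,y,z),x]$, $J(x,y,z)=[[x,y],z]+[[z,x],y]+[[y,z],x]$. Malcev-Poisson algebra: Malcev bracket plus commutative associative product $\circ$ with $[x,y\circ z]=[x,y]\circ z+y\circ[x,z]$. Representations: Malcev, $\varrho([[x,y],z])=\varrho(z)\varrho(y)\varrho(x)-\varrho(y)\varrho(x)\varrho(z)+\varrho(x)\varrho([y,z])+\varrho([x,z])\varrho(y)$; associative, $\mu(x\circ y)=\mu(x)\mu(y)$; Malcev-Poisson, a pair $(\varrho,\mu)$ of these with $\varrho(x\circ y)=\mu(y)\varrho(x)+\mu(x)\varrho(y)$, $\mu([x,y])=\varrho(x)\mu(y)-\mu(y)\varrho(x)$. Notation: $\mathrm{ad}(x)y=[x,y]$, $L(x)y=x\circ y$; for $\theta:A\to\mathrm{End}(V)$, $\langle\theta^*(x)\xi,v\rangle=-\langle\xi,\theta(x)v\rangle$; $\mathrm{ad}_A^*,L^*$ are duals of $\mathrm{ad},L$; $\mathrm{ad}_{A^*}^*,\mathcal{L}_{A^*}^*:A^*\to\mathrm{End}(A)$ are given by $\langle\mathrm{ad}_{A^*}^*(\xi)x,\eta\rangle=-\langle x,[\xi,\eta]^*\rangle$, $\langle\mathcal{L}_{A^*}^*(\xi)x,\eta\rangle=-\langle x,\xi\circ_{A^*}\eta\rangle$. $\tau(x\otimes y)=y\otimes x$, $\sigma(x\otimes y\otimes z\otimes t)=y\otimes z\otimes t\otimes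 x$. Malcev-Poisson bialgebra $(A,[\cdot,\cdot],\circ,\Delta,\delta)$: (a) $(A,[\cdot,\cdot],\circ)$ Malcev-Poisson algebra; (b) $(A,\Delta,\delta)$ Malcev-Poisson coalgebra, i.e. $\tau\Delta=\Delta$, $(\mathrm{id}\otimes\Delta)\Delta=(\Delta\otimes\mathrm{id})\Delta$, $\tau\delta=-\delta$, $(\mathrm{id}\otimes\tau\otimes\mathrm{id})(\delta\otimes\delta)\delta=(\mathrm{id}+\sigma+\sigma^2+\sigma^3)(\delta\otimes\mathrm{id}\otimes\mathrm{id})(\delta\otimes\mathrm{id})\delta$, and $(\mathrm{id}\otimes\Delta)\delta(x)-(\delta\otimes\mathrm{id})\Delta(x)-(\tau\otimes\mathrm{id})(\mathrm{id}\otimes\delta)\Delta(x)=0$; (c) $\Delta(x\circ y)=(L(x)\otimes\mathrm{id})\Delta(y)+(\mathrm{id}\otimes L(y))\Delta(x)$; (d) $(A,[\cdot,\cdot],\delta)$ is a Malcev bialgebra, meaning the Malcev bialgebra compatibility conditions of Vershinin hold, which are equivalent to: $\mathrm{ad}_A^*$, $\mathrm{ad}_{A^*}^*$ being representations and the bracket $[x+\xi,y+\eta]=[x,y]+\mathrm{ad}_{A^*}^*(\xi)y-\mathrm{ad}_{A^*}^*(\eta)x+[\xi,\eta]^*+\mathrm{ad}_A^*(x)\eta-\mathrm{ad}_A^*(y)\xi$ on $A\oplus A^*$ being a Malcev bracket; (e) for all $x,y\in A$: $\delta(x\circ y)+(\mathrm{ad}(y)\otimes\mathrm{id})\Delta(x)-(\mathrm{id}\otimes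 L(x))\delta(y)+(\mathrm{ad}(x)\otimes\mathrm{id})\Delta(y)-(\mathrm{id}\otimes L(y))\delta(x)=0$ and $\Delta([x,y])-(L(y)\otimes\mathrm{id})\delta(x)-(\mathrm{id}\otimes\mathrm{ad}(x))\Delta(y)+(\mathrm{id}\otimes L(y))\delta(x)-(\mathrm{ad}(x)\otimes\mathrm{id})\Delta(y)=0$. Matched pair of Malcev-Poisson algebras $(A_1,A_2,\varrho_1,\mu_1,\varrho_2,\mu_2)$: $\mu_1,\mu_2$ associative representations with $\mu_1(x_1)(x_2\circ_2y_2)=(\mu_1(x_1)x_2)\circ_2y_2+\mu_1(\mu_2(x_2)x_1)y_2$, $\mu_2(x_2)(x_1\circ_1y_1)=(\mu_2(x_2)x_1)\circ_1y_1+\mu_2(\mu_1(x_1)x_2)y_1$; $\varrho_1,\varrho_2$ Malcev representations with $[x_1+x_2,y_1+y_2]=[x_1,y_1]_1+\varrho_2(x_2)y_1-\varrho_2(y_2)x_1+[x_2,y_2]_2+\varrho_1(x_1)y_2-\varrho_1(y_1)x_2$ a Malcev bracket on $A_1\oplus A_2$; $(A_2,\varrho_1,\mu_1)$, $(A_1,\varrho_2,\mu_2)$ Malcev-Poisson representations; and $\varrho_2(x_2)(x_1\circ_1y_1)=(\varrho_2(x_2)x_1)\circ_1y_1+x_1\circ_1(\varrho_2(x_2)y_1)-\mu_2(\varrho_1(x_1)x_2)y_1-\mu_2(\varrho_1(y_1)x_2)x_1$, $\varrho_1(x_1)(x_2\circ_2y_2)=(\varrho_1(x_1)x_2)\circ_2y_2+x_2\circ_2(\varrho_1(x_1)y_2)-\mu_1(\varrho_2(x_2)x_1)y_2-\mu_1(\varrho_2(y_2)x_1)x_2$,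 $[x_1,\mu_2(x_2)y_1]_1-\varrho_2(\mu_1(y_1)x_2)x_1=\mu_2(\varrho_1(x_1)x_2)y_1-(\varrho_2(x_2)x_1)\circ_1y_1+\mu_2(x_2)[x_1,y_1]_1$, $[x_2,\mu_1(x_1)y_2]_2-\varrho_1(\mu_2(y_2)x_1)x_2=\mu_1(\varrho_2(x_2)x_1)y_2-(\varrho_1(x_1)x_2)\circ_2y_2+\mu_1(x_1)[x_2,y_2]_2$. Standard Manin triple: a Malcev-Poisson structure on $A\oplus A^*$ with $A$, $A^*$ as Malcev-Poisson subalgebras and $\omega_d$ invariant: $\omega_d(u\circ v,w)=\omega_d(u,v\circ w)$, $\omega_d([u,v],w)=\omega_d(u,[v,w])$. *)

theory Defs
  imports "HOL-Computational_Algebra.Polynomial" "HOL-Library.Function_Algebras"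
begin

(* Finite-dimensional spaces are coordinate spaces  'i \<Rightarrow> 'k  with 'i finite
   (basis = standard basis).  A* is identified with 'n \<Rightarrow> 'k via the
   dual basis; A\<otimes>A with 'n \<Rightarrow> 'n \<Rightarrow> 'k, A\<otimes>A\<otimes>A with 'n \<Rightarrow> 'n \<Rightarrow> 'n \<Rightarrow> 'k, etc.
   Vector addition / subtraction / zero are pointwise (Function_Algebras). *)

definition smult_v :: "'k::field \<Rightarrow> ('i \<Rightarrow> 'k) \<Rightarrow> ('i \<Rightarrow> 'k)" where
  "smult_v c x = (\<lambda>i. c * x i)"

definition bvec :: "'i \<Rightarrow> ('i \<Rightarrow> 'k::field)" where
  "bvec a = (\<lambda>i. if i = a then 1 else 0)"

definition pairing :: "('i::finite \<Rightarrow> 'k::field) \<Rightarrow> ('i \<Rightarrow> 'k) \<Rightarrow> 'k" where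
  "pairing u v = (\<Sum>i\<in>UNIV. u i * v i)"

definition lin :: "(('a \<Rightarrow> 'k::field) \<Rightarrow> ('b \<Rightarrow> 'k)) \<Rightarrow> bool" where
  "lin f \<longleftrightarrow> (\<forall>x y. f (x + y) = f x + f y) \<and> (\<forall>c x. f (smult_v c x) = smult_v c (f x))"

definition bilin :: "(('a \<Rightarrow> 'k::field) \<Rightarrow> ('b \<Rightarrow> 'k) \<Rightarrow> ('c \<Rightarrow> 'k)) \<Rightarrow> bool" where
  "bilin b \<longleftrightarrow> (\<forall>x. lin (b x)) \<and> (\<forall>y. lin (\<lambda>x. b x y))"

definition lin2 :: "(('a \<Rightarrow> 'k::field) \<Rightarrow> ('b \<Rightarrow> 'b \<Rightarrow> 'k)) \<Rightarrow> bool" where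
  "lin2 F \<longleftrightarrow> (\<forall>x y. F (x + y) = F x + F y) \<and> (\<forall>c x. F (smult_v c x) = (\<lambda>i j. c * F x i j))"

definition jacobiator :: "(('i \<Rightarrow> 'k::field) \<Rightarrow> ('i \<Rightarrow> 'k) \<Rightarrow> ('i \<Rightarrow> 'k)) \<Rightarrow> ('i \<Rightarrow> 'k) \<Rightarrow> ('i \<Rightarrow> 'k) \<Rightarrow> ('i \<Rightarrow> 'k) \<Rightarrow> ('i \<Rightarrow> 'k)" where
  "jacobiator br x y z = br (br x y) z + br (br z x) y + br (br y z) x"

definition malcev_alg :: "(('i \<Rightarrow> 'k::field) \<Rightarrow> ('i \<Rightarrow> 'k) \<Rightarrow> ('i \<Rightarrow> 'k)) \<Rightarrow> bool" where
  "malcev_alg br \<longleftrightarrow> bilin br \<and> (\<forall>x y. br x y = - br y x) \<and>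
     (\<forall>x y z. jacobiator br x y (br x z) = br (jacobiator br x y z) x)"

definition malcev_poisson_alg :: "(('i \<Rightarrow> 'k::field) \<Rightarrow> ('i \<Rightarrow> 'k) \<Rightarrow> ('i \<Rightarrow> 'k)) \<Rightarrow> (('i \<Rightarrow> 'k) \<Rightarrow> ('i \<Rightarrow> 'k) \<Rightarrow> ('i \<Rightarrow> 'k)) \<Rightarrow> bool" where
  "malcev_poisson_alg br pr \<longleftrightarrow> malcev_alg br \<and> bilin pr \<and>
     (\<forall>x y. pr x y = pr y x) \<and> (\<forall>x y z. pr (pr x y) z = pr x (pr y z)) \<and>
     (\<forall>x y z. br x (pr y z) = pr (br x y) z + pr y (br x z))"

definition malcev_rep :: "(('i \<Rightarrow> 'k::field) \<Rightarrow> ('i \<Rightarrow> 'k) \<Rightarrow> ('i \<Rightarrow> 'k)) \<Rightarrow> (('i \<Rightarrow> 'k) \<Rightarrow> ('j \<Rightarrow> 'k) \<Rightarrow> ('j \<Rightarrow> 'k)) \<Rightarrow> bool" where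
  "malcev_rep br rho \<longleftrightarrow> bilin rho \<and>
     (\<forall>x y z v. rho (br (br x y) z) v =
        rho z (rho y (rho x v)) - rho y (rho x (rho z v)) + rho x (rho (br y z) v) + rho (br x z) (rho y v))"

definition assoc_rep :: "(('i \<Rightarrow> 'k::field) \<Rightarrow> ('i \<Rightarrow> 'k) \<Rightarrow> ('i \<Rightarrow> 'k)) \<Rightarrow> (('i \<Rightarrow> 'k) \<Rightarrow> ('j \<Rightarrow> 'k) \<Rightarrow> ('j \<Rightarrow> 'k)) \<Rightarrow> bool" where
  "assoc_rep pr mu \<longleftrightarrow> bilin mu \<and> (\<forall>x y v. mu (pr x y) v = mu x (mu y v))"

definition mp_rep :: "(('i \<Rightarrow> 'k::field) \<Rightarrow> ('i \<Rightarrow> 'k) \<Rightarrow> ('i \<Rightarrow> 'k)) \<Rightarrow> (('i \<Rightarrow> 'k) \<Rightarrow> ('i \<Rightarrow> 'k) \<Rightarrow> ('i \<Rightarrow> 'k))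
     \<Rightarrow> (('i \<Rightarrow> 'k) \<Rightarrow> ('j \<Rightarrow> 'k) \<Rightarrow> ('j \<Rightarrow> 'k)) \<Rightarrow> (('i \<Rightarrow> 'k) \<Rightarrow> ('j \<Rightarrow> 'k) \<Rightarrow> ('j \<Rightarrow> 'k)) \<Rightarrow> bool" where
  "mp_rep br pr rho mu \<longleftrightarrow> malcev_rep br rho \<and> assoc_rep pr mu \<and>
     (\<forall>x y v. rho (pr x y) v = mu y (rho x v) + mu x (rho y v)) \<and>
     (\<forall>x y v. mu (br x y) v = rho x (mu y v) - mu y (rho x v))"

definition inl_v :: "('i \<Rightarrow> 'k::zero) \<Rightarrow> ('i + 'j \<Rightarrow> 'k)" where
  "inl_v x = (\<lambda>s. case s of Inl i \<Rightarrow> x i | Inr _ \<Rightarrow> 0)"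

definition inr_v :: "('j \<Rightarrow> 'k::zero) \<Rightarrow> ('i + 'j \<Rightarrow> 'k)" where
  "inr_v x = (\<lambda>s. case s of Inl _ \<Rightarrow> 0 | Inr j \<Rightarrow> x j)"

definition projl :: "('i + 'j \<Rightarrow> 'k) \<Rightarrow> ('i \<Rightarrow> 'k)" where
  "projl u = (\<lambda>i. u (Inl i))"

definition projr :: "('i + 'j \<Rightarrow> 'k) \<Rightarrow> ('j \<Rightarrow> 'k)" where
  "projr u = (\<lambda>j. u (Inr j))"

definition mp_bracket ::
  "(('i \<Rightarrow> 'k::field) \<Rightarrow> ('i \<Rightarrow> 'k) \<Rightarrow> ('i \<Rightarrow> 'k)) \<Rightarrow> (('j \<Rightarrow> 'k) \<Rightarrow> ('j \<Rightarrow> 'k) \<Rightarrow> ('j \<Rightarrow> 'k))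
   \<Rightarrow> (('i \<Rightarrow> 'k) \<Rightarrow> ('j \<Rightarrow> 'k) \<Rightarrow> ('j \<Rightarrow> 'k)) \<Rightarrow> (('j \<Rightarrow> 'k) \<Rightarrow> ('i \<Rightarrow> 'k) \<Rightarrow> ('i \<Rightarrow> 'k))
   \<Rightarrow> ('i + 'j \<Rightarrow> 'k) \<Rightarrow> ('i + 'j \<Rightarrow> 'k) \<Rightarrow> ('i + 'j \<Rightarrow> 'k)" where
  "mp_bracket br1 br2 rho1 rho2 u v =
     inl_v (br1 (projl u) (projl v) + rho2 (projr u) (projl v) - rho2 (projr v) (projl u))
   + inr_v (br2 (projr u) (projr v) + rho1 (projl u) (projr v) - rho1 (projl v) (projr u))"

definition matched_pair ::
  "(('i \<Rightarrow> 'k::field) \<Rightarrow> ('i \<Rightarrow> 'k) \<Rightarrow> ('i \<Rightarrow> 'k)) \<Rightarrow> (('i \<Rightarrow> 'k) \<Rightarrow> ('i \<Rightarrow> 'k) \<Rightarrow> ('i \<Rightarrow> 'k))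
   \<Rightarrow> (('j \<Rightarrow> 'k) \<Rightarrow> ('j \<Rightarrow> 'k) \<Rightarrow> ('j \<Rightarrow> 'k)) \<Rightarrow> (('j \<Rightarrow> 'k) \<Rightarrow> ('j \<Rightarrow> 'k) \<Rightarrow> ('j \<Rightarrow> 'k))
   \<Rightarrow> (('i \<Rightarrow> 'k) \<Rightarrow> ('j \<Rightarrow> 'k) \<Rightarrow> ('j \<Rightarrow> 'k)) \<Rightarrow> (('i \<Rightarrow> 'k) \<Rightarrow> ('j \<Rightarrow> 'k) \<Rightarrow> ('j \<Rightarrow> 'k))
   \<Rightarrow> (('j \<Rightarrow> 'k) \<Rightarrow> ('i \<Rightarrow> 'k) \<Rightarrow> ('i \<Rightarrow> 'k)) \<Rightarrow> (('j \<Rightarrow> 'k) \<Rightarrow> ('i \<Rightarrow> 'k) \<Rightarrow> ('i \<Rightarrow> 'k)) \<Rightarrow> bool" where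
  "matched_pair br1 pr1 br2 pr2 rho1 mu1 rho2 mu2 \<longleftrightarrow>
     malcev_poisson_alg br1 pr1 \<and> malcev_poisson_alg br2 pr2 \<and>
     assoc_rep pr1 mu1 \<and> assoc_rep pr2 mu2 \<and>
     (\<forall>x1 x2 y2. mu1 x1 (pr2 x2 y2) = pr2 (mu1 x1 x2) y2 + mu1 (mu2 x2 x1) y2) \<and>
     (\<forall>x2 x1 y1. mu2 x2 (pr1 x1 y1) = pr1 (mu2 x2 x1) y1 + mu2 (mu1 x1 x2) y1) \<and>
     malcev_rep br1 rho1 \<and> malcev_rep br2 rho2 \<and>
     malcev_alg (mp_bracket br1 br2 rho1 rho2) \<and>
     mp_rep br1 pr1 rho1 mu1 \<and> mp_rep br2 pr2 rho2 mu2 \<and>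
     (\<forall>x2 x1 y1. rho2 x2 (pr1 x1 y1) = pr1 (rho2 x2 x1) y1 + pr1 x1 (rho2 x2 y1)
                    - mu2 (rho1 x1 x2) y1 - mu2 (rho1 y1 x2) x1) \<and>
     (\<forall>x1 x2 y2. rho1 x1 (pr2 x2 y2) = pr2 (rho1 x1 x2) y2 + pr2 x2 (rho1 x1 y2)
                    - mu1 (rho2 x2 x1) y2 - mu1 (rho2 y2 x1) x2) \<and>
     (\<forall>x1 x2 y1. br1 x1 (mu2 x2 y1) - rho2 (mu1 y1 x2) x1
                  = mu2 (rho1 x1 x2) y1 - pr1 (rho2 x2 x1) y1 + mu2 x2 (br1 x1 y1)) \<and>
     (\<forall>x2 x1 y2. br2 x2 (mu1 x1 y2) - rho1 (mu2 y2 x1) x2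
                  = mu1 (rho2 x2 x1) y2 - pr2 (rho1 x1 x2) y2 + mu1 x1 (br2 x2 y2))"

(* <theta^*(x) xi, v> = - <xi, theta(x) v> *)
definition coad :: "('a \<Rightarrow> ('i \<Rightarrow> 'k) \<Rightarrow> ('i \<Rightarrow> 'k)) \<Rightarrow> 'a \<Rightarrow> ('i::finite \<Rightarrow> 'k::field) \<Rightarrow> ('i \<Rightarrow> 'k)" where
  "coad theta x xi = (\<lambda>k. - pairing xi (theta x (bvec k)))"

(* operation on A* dual to a comultiplication D : A \<rightarrow> A\<otimes>A :  <D^*(xi\<otimes>eta), x> = <xi\<otimes>eta, D x> *)
definition dual_op :: "(('n::finite \<Rightarrow> 'k::field) \<Rightarrow> ('n \<Rightarrow> 'n \<Rightarrow> 'k)) \<Rightarrow> ('n \<Rightarrow> 'k) \<Rightarrow> ('n \<Rightarrow> 'k) \<Rightarrow> ('n \<Rightarrow> 'k)" where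
  "dual_op D xi eta = (\<lambda>k. \<Sum>i\<in>UNIV. \<Sum>j\<in>UNIV. xi i * eta j * D (bvec k) i j)"

definition tens2 :: "(('n::finite \<Rightarrow> 'k::field) \<Rightarrow> ('n \<Rightarrow> 'k)) \<Rightarrow> (('n \<Rightarrow> 'k) \<Rightarrow> ('n \<Rightarrow> 'k)) \<Rightarrow> ('n \<Rightarrow> 'n \<Rightarrow> 'k) \<Rightarrow> ('n \<Rightarrow> 'n \<Rightarrow> 'k)" where
  "tens2 f g T = (\<lambda>i j. \<Sum>a\<in>UNIV. \<Sum>b\<in>UNIV. T a b * f (bvec a) i * g (bvec b) j)"

definition swap2 :: "('n \<Rightarrow> 'n \<Rightarrow> 'k) \<Rightarrow> ('n \<Rightarrow> 'n \<Rightarrow> 'k)" where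
  "swap2 T = (\<lambda>i j. T j i)"

definition tens_F_id :: "(('n::finite \<Rightarrow> 'k::field) \<Rightarrow> ('n \<Rightarrow> 'n \<Rightarrow> 'k)) \<Rightarrow> ('n \<Rightarrow> 'n \<Rightarrow> 'k) \<Rightarrow> ('n \<Rightarrow> 'n \<Rightarrow> 'n \<Rightarrow> 'k)" where
  "tens_F_id F T = (\<lambda>i j k. \<Sum>a\<in>UNIV. T a k * F (bvec a) i j)"

definition tens_id_F :: "(('n::finite \<Rightarrow> 'k::field) \<Rightarrow> ('n \<Rightarrow> 'n \<Rightarrow> 'k)) \<Rightarrow> ('n \<Rightarrow> 'n \<Rightarrow> 'k) \<Rightarrow> ('n \<Rightarrow> 'n \<Rightarrow> 'n \<Rightarrow> 'k)" where
  "tens_id_F F T = (\<lambda>i j k. \<Sum>b\<in>UNIV. T i b * F (bvec b) j k)"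

definition tens_F_id_id :: "(('n::finite \<Rightarrow> 'k::field) \<Rightarrow> ('n \<Rightarrow> 'n \<Rightarrow> 'k)) \<Rightarrow> ('n \<Rightarrow> 'n \<Rightarrow> 'n \<Rightarrow> 'k) \<Rightarrow> ('n \<Rightarrow> 'n \<Rightarrow> 'n \<Rightarrow> 'n \<Rightarrow> 'k)" where
  "tens_F_id_id F T = (\<lambda>i j k l. \<Sum>a\<in>UNIV. T a k l * F (bvec a) i j)"

definition tens_F_G :: "(('n::finite \<Rightarrow> 'k::field) \<Rightarrow> ('n \<Rightarrow> 'n \<Rightarrow> 'k)) \<Rightarrow> (('n \<Rightarrow> 'k) \<Rightarrow> ('n \<Rightarrow> 'n \<Rightarrow> 'k)) \<Rightarrow> ('n \<Rightarrow> 'n \<Rightarrow> 'k) \<Rightarrow> ('n \<Rightarrow> 'n \<Rightarrow> 'n \<Rightarrow> 'n \<Rightarrow> 'k)" where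
  "tens_F_G F G T = (\<lambda>i j k l. \<Sum>a\<in>UNIV. \<Sum>b\<in>UNIV. T a b * F (bvec a) i j * G (bvec b) k l)"

definition tau_id :: "('n \<Rightarrow> 'n \<Rightarrow> 'n \<Rightarrow> 'k) \<Rightarrow> ('n \<Rightarrow> 'n \<Rightarrow> 'n \<Rightarrow> 'k)" where
  "tau_id T = (\<lambda>i j k. T j i k)"

definition id_tau_id :: "('n \<Rightarrow> 'n \<Rightarrow> 'n \<Rightarrow> 'n \<Rightarrow> 'k) \<Rightarrow> ('n \<Rightarrow> 'n \<Rightarrow> 'n \<Rightarrow> 'n \<Rightarrow> 'k)" where
  "id_tau_id T = (\<lambda>i j k l. T i k j l)"

(* sigma(x\<otimes>y\<otimes>z\<otimes>t) = y\<otimes>z\<otimes>t\<otimes>x *)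
definition sigma4 :: "('n \<Rightarrow> 'n \<Rightarrow> 'n \<Rightarrow> 'n \<Rightarrow> 'k) \<Rightarrow> ('n \<Rightarrow> 'n \<Rightarrow> 'n \<Rightarrow> 'n \<Rightarrow> 'k)" where
  "sigma4 T = (\<lambda>i j k l. T l i j k)"

definition mp_coalg :: "(('n::finite \<Rightarrow> 'k::field) \<Rightarrow> ('n \<Rightarrow> 'n \<Rightarrow> 'k)) \<Rightarrow> (('n \<Rightarrow> 'k) \<Rightarrow> ('n \<Rightarrow> 'n \<Rightarrow> 'k)) \<Rightarrow> bool" where
  "mp_coalg Delta delta \<longleftrightarrow> lin2 Delta \<and> lin2 delta \<and>
     (\<forall>x. swap2 (Delta x) = Delta x) \<and>
     (\<forall>x. tens_id_F Delta (Delta x) = tens_F_id Delta (Delta x)) \<and>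
     (\<forall>x. swap2 (delta x) = - delta x) \<and>
     (\<forall>x. let Q = tens_F_id_id delta (tens_F_id delta (delta x)) in
          id_tau_id (tens_F_G delta delta (delta x))
            = Q + sigma4 Q + sigma4 (sigma4 Q) + sigma4 (sigma4 (sigma4 Q))) \<and>
     (\<forall>x. tens_id_F Delta (delta x) - tens_F_id delta (Delta x) - tau_id (tens_id_F delta (Delta x)) = 0)"

(* Malcev bialgebra (A, [,], delta), in the equivalent form given in the context *)
definition malcev_bialg :: "(('n::finite \<Rightarrow> 'k::field) \<Rightarrow> ('n \<Rightarrow> 'k) \<Rightarrow> ('n \<Rightarrow> 'k)) \<Rightarrow> (('n \<Rightarrow> 'k) \<Rightarrow> ('n \<Rightarrow> 'n \<Rightarrow> 'k)) \<Rightarrow> bool" where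
  "malcev_bialg br delta \<longleftrightarrow>
     malcev_rep br (coad br) \<and> malcev_rep (dual_op delta) (coad (dual_op delta)) \<and>
     malcev_alg (mp_bracket br (dual_op delta) (coad br) (coad (dual_op delta)))"

definition mp_bialg :: "(('n::finite \<Rightarrow> 'k::field) \<Rightarrow> ('n \<Rightarrow> 'k) \<Rightarrow> ('n \<Rightarrow> 'k)) \<Rightarrow> (('n \<Rightarrow> 'k) \<Rightarrow> ('n \<Rightarrow> 'k) \<Rightarrow> ('n \<Rightarrow> 'k))
     \<Rightarrow> (('n \<Rightarrow> 'k) \<Rightarrow> ('n \<Rightarrow> 'n \<Rightarrow> 'k)) \<Rightarrow> (('n \<Rightarrow> 'k) \<Rightarrow> ('n \<Rightarrow> 'n \<Rightarrow> 'k)) \<Rightarrow> bool" where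
  "mp_bialg br pr Delta delta \<longleftrightarrow>
     malcev_poisson_alg br pr \<and>
     mp_coalg Delta delta \<and>
     (\<forall>x y. Delta (pr x y) = tens2 (pr x) id (Delta y) + tens2 id (pr y) (Delta x)) \<and>
     malcev_bialg br delta \<and>
     (\<forall>x y. delta (pr x y) + tens2 (br y) id (Delta x) - tens2 id (pr x) (delta y)
              + tens2 (br x) id (Delta y) - tens2 id (pr y) (delta x) = 0) \<and>
     (\<forall>x y. Delta (br x y) - tens2 (pr y) id (delta x) - tens2 id (br x) (Delta y)
              + tens2 id (pr y) (delta x) - tens2 (br x) id (Delta y) = 0)"

definition omega_d :: "('n::finite + 'n \<Rightarrow> 'k) \<Rightarrow> ('n + 'n \<Rightarrow> 'k) \<Rightarrow> 'k::{field}" where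
  "omega_d u v = pairing (projl u) (projr v) + pairing (projr u) (projl v)"

definition std_manin_triple :: "(('n::finite \<Rightarrow> 'k::field) \<Rightarrow> ('n \<Rightarrow> 'k) \<Rightarrow> ('n \<Rightarrow> 'k)) \<Rightarrow> (('n \<Rightarrow> 'k) \<Rightarrow> ('n \<Rightarrow> 'k) \<Rightarrow> ('n \<Rightarrow> 'k))
     \<Rightarrow> (('n \<Rightarrow> 'k) \<Rightarrow> ('n \<Rightarrow> 'k) \<Rightarrow> ('n \<Rightarrow> 'k)) \<Rightarrow> (('n \<Rightarrow> 'k) \<Rightarrow> ('n \<Rightarrow> 'k) \<Rightarrow> ('n \<Rightarrow> 'k)) \<Rightarrow> bool" where
  "std_manin_triple br pr brd prd \<longleftrightarrow>
     (\<exists>brS prS :: ('n + 'n \<Rightarrow> 'k) \<Rightarrow> ('n + 'n \<Rightarrow> 'k) \<Rightarrow> ('n + 'n \<Rightarrow> 'k).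
        malcev_poisson_alg brS prS \<and>
        (\<forall>x y. brS (inl_v x) (inl_v y) = inl_v (br x y) \<and> prS (inl_v x) (inl_v y) = inl_v (pr x y)) \<and>
        (\<forall>xi eta. brS (inr_v xi) (inr_v eta) = inr_v (brd xi eta) \<and> prS (inr_v xi) (inr_v eta) = inr_v (prd xi eta)) \<and>
        (\<forall>u v w. omega_d (prS u v) w = omega_d u (prS v w)) \<and>
        (\<forall>u v w. omega_d (brS u v) w = omega_d u (brS v w)))"

end

theory Submission
  imports Defs
begin

lemma sum_apply_fun: "(\<Sum>a\<in>S. f a) x = (\<Sum>a\<in>S. f a x)"
  by (induction S rule: infinite_finite_induct) auto
lemma if01_mult[simp]: "(if P then 1 else 0) * (x::'a::{mult_zero,monoid_mult}) = (if P then x else 0)" by simp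
lemma mult_if01[simp]: "(x::'a::{mult_zero,monoid_mult}) * (if P then 1 else 0) = (if P then x else 0)" by simp
lemma sum_bvec_left[simp]: "(\<Sum>a\<in>UNIV. bvec k a * (f a::'k::field)) = f (k::'i::finite)"
  by (simp add: bvec_def)
lemma sum_bvec_right[simp]: "(\<Sum>a\<in>UNIV. (f a::'k::field) * bvec k a) = f (k::'i::finite)"
  by (simp add: bvec_def)
lemma pairing_bvec_left[simp]: "pairing (bvec k) (v::'i::finite \<Rightarrow> 'k::field) = v k"
  unfolding pairing_def by simp
lemma pairing_bvec_right[simp]: "pairing (v::'i::finite \<Rightarrow> 'k::field) (bvec k) = v k"
  unfolding pairing_def by simp
lemma vec_expand: "(x::'i::finite \<Rightarrow> 'k::field) = (\<Sum>a\<in>UNIV. smult_v (x a) (bvec a))"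
  by (rule ext) (simp add: sum_apply_fun smult_v_def bvec_def)
lemma dual_op_bvec: "dual_op D (bvec i) (bvec j) k = D (bvec k) i j"
  by (simp add: dual_op_def mult.assoc flip: sum_distrib_left)

lemma pairing_comm: "pairing u v = pairing v u"
  by (simp add: pairing_def mult.commute)
lemma pairing_add_left[simp]: "pairing (u + w) v = pairing u v + pairing w v"
  by (simp add: pairing_def distrib_right sum.distrib)
lemma pairing_add_right[simp]: "pairing v (u + w) = pairing v u + pairing v w"
  by (simp add: pairing_def distrib_left sum.distrib)
lemma pairing_diff_left[simp]: "pairing (u - w) v = pairing u v - pairing w v"
  by (simp add: pairing_def left_diff_distrib sum_subtractf)
lemma pairing_diff_right[simp]: "pairing v (u - w) = pairing v u - pairing v w"
  by (simp add: pairing_def right_diff_distrib sum_subtractf)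
lemma pairing_neg_left[simp]: "pairing (- u) v = - pairing u v"
  by (simp add: pairing_def sum_negf)
lemma pairing_neg_right[simp]: "pairing v (- u) = - pairing v u"
  by (simp add: pairing_def sum_negf)
lemma pairing_zero_left[simp]: "pairing 0 v = 0"
  by (simp add: pairing_def)
lemma pairing_zero_right[simp]: "pairing v 0 = 0"
  by (simp add: pairing_def)
lemma pairing_smult_left[simp]: "pairing (smult_v c u) v = c * pairing u v"
  by (simp add: pairing_def smult_v_def sum_distrib_left mult.assoc)
lemma pairing_smult_right[simp]: "pairing v (smult_v c u) = c * pairing v u"
  by (simp add: pairing_def smult_v_def sum_distrib_left algebra_simps)

lemma vec_eqI_pair: "(\<And>w. pairing u w = pairing v (w::'i::finite \<Rightarrow> 'k::field)) \<Longrightarrow> u = v"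
proof (rule ext)
  fix k assume "\<And>w. pairing u w = pairing v w"
  from this[of "bvec k"] show "u k = v k" by simp
qed

lemma vec_eqI_pair': "(\<And>w. pairing w u = pairing w (v::'i::finite \<Rightarrow> 'k::field)) \<Longrightarrow> u = v"
  by (rule vec_eqI_pair) (simp add: pairing_comm)

lemma lin_add: "lin f \<Longrightarrow> f (x + y) = f x + f y" by (simp add: lin_def)
lemma lin_smult: "lin f \<Longrightarrow> f (smult_v c x) = smult_v c (f x)" by (simp add: lin_def)
lemma lin_zero: "lin f \<Longrightarrow> f 0 = 0"
  using lin_add[of f 0 0] by simp
lemma lin_neg: "lin f \<Longrightarrow> f (- x) = - f x"
proof -
  assume l: "lin f"
  have "f x + f (- x) = 0" using lin_add[OF l, of x "- x"] lin_zero[OF l] by simp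
  then show ?thesis by (simp add: add_eq_0_iff)
qed
lemma lin_diff: "lin f \<Longrightarrow> f (x - y) = f x - f y"
  using lin_add[of f x "- y"] lin_neg[of f y] by simp
lemma lin_sum: "lin f \<Longrightarrow> f (\<Sum>a\<in>S. g a) = (\<Sum>a\<in>S. f (g a))"
  by (induction S rule: infinite_finite_induct) (auto simp: lin_zero lin_add)

lemma lin_expand: "lin f \<Longrightarrow> f (x::'i::finite \<Rightarrow> 'k::field) j = (\<Sum>a\<in>UNIV. x a * f (bvec a) j)"
proof -
  assume l: "lin f"
  have "f x = f (\<Sum>a\<in>UNIV. smult_v (x a) (bvec a))" by (subst vec_expand) simp
  also have "\<dots> = (\<Sum>a\<in>UNIV. smult_v (x a) (f (bvec a)))" using l by (simp add: lin_sum lin_smult)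
  finally show ?thesis by (simp add: sum_apply_fun smult_v_def)
qed

lemma lin2_expand: "lin2 F \<Longrightarrow> F (x::'i::finite \<Rightarrow> 'k::field) i j = (\<Sum>a\<in>UNIV. x a * F (bvec a) i j)"
proof -
  assume l: "lin2 F"
  have "F (0 + 0) = F 0 + F 0" using l unfolding lin2_def by blast
  then have z: "F 0 = 0" by simp
  have s: "F (\<Sum>a\<in>S. g a) = (\<Sum>a\<in>S. F (g a))" for S g
  proof (induction S rule: infinite_finite_induct)
    case (infinite A) then show ?case by (simp only: sum.infinite[OF infinite] z)
  next
    case empty then show ?case by (simp only: sum.empty z)
  next
    case (insert x S)
    have a: "F (u + v) = F u + F v" for u v using l unfolding lin2_def by blast
    show ?case by (simp only: sum.insert[OF insert(1,2)] a insert(3))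
  qed
  have "F x = F (\<Sum>a\<in>UNIV. smult_v (x a) (bvec a))" by (subst vec_expand) simp
  also have "\<dots> = (\<Sum>a\<in>UNIV. F (smult_v (x a) (bvec a)))" by (rule s)
  also have "\<dots> = (\<Sum>a\<in>UNIV. (\<lambda>i j. x a * F (bvec a) i j))"
    using l unfolding lin2_def by simp
  finally show ?thesis by (simp only: sum_apply_fun)
qed

lemma pairing_transp: "lin f \<Longrightarrow> pairing (\<lambda>k. pairing z (f (bvec k))) (y::'i::finite \<Rightarrow> 'k::field) = pairing z (f y)"
proof -
  assume l: "lin f"
  have "pairing z (f y) = (\<Sum>i\<in>UNIV. z i * (\<Sum>a\<in>UNIV. y a * f (bvec a) i))"
    unfolding pairing_def by (simp only: lin_expand[OF l, of y])
  also have "\<dots> = (\<Sum>i\<in>UNIV. \<Sum>a\<in>UNIV. z i * f (bvec a) i * y a)"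
    by (simp only: sum_distrib_left mult_ac)
  also have "\<dots> = (\<Sum>a\<in>UNIV. \<Sum>i\<in>UNIV. z i * f (bvec a) i * y a)"
    by (rule sum.swap)
  also have "\<dots> = (\<Sum>a\<in>UNIV. (\<Sum>i\<in>UNIV. z i * f (bvec a) i) * y a)"
    by (simp only: sum_distrib_right)
  finally show ?thesis by (simp add: pairing_def)
qed

lemma coad_pair: "lin (\<theta> x) \<Longrightarrow> pairing (coad \<theta> x \<xi>) y = - pairing \<xi> (\<theta> x y)"
proof -
  assume l: "lin (\<theta> x)"
  have "coad \<theta> x \<xi> = - (\<lambda>k. pairing \<xi> (\<theta> x (bvec k)))" by (simp add: coad_def fun_Compl_def)
  then show ?thesis using pairing_transp[OF l] by simp
qed

lemma coad_pair': "lin (\<theta> x) \<Longrightarrow> pairing y (coad \<theta> x \<xi>) = - pairing \<xi> (\<theta> x y)"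
  using coad_pair by (metis pairing_comm)

lemma Dcoef: "lin2 D \<Longrightarrow> D x i j = pairing (dual_op D (bvec i) (bvec j)) x"
  apply (subst lin2_expand[of D x], assumption)
  by (simp add: dual_op_bvec pairing_def mult.commute)

definition c2 :: "('n::finite \<Rightarrow> 'n \<Rightarrow> 'k::field) \<Rightarrow> ('n \<Rightarrow> 'k) \<Rightarrow> ('n \<Rightarrow> 'k) \<Rightarrow> 'k" where
  "c2 T a b = (\<Sum>i\<in>UNIV. \<Sum>j\<in>UNIV. a i * b j * T i j)"

lemma c2_bvec: "c2 T (bvec i) (bvec j) = T i j"
  by (simp add: c2_def mult.assoc flip: sum_distrib_left)

lemma c2_eqI: "(\<And>a b. c2 T a b = c2 T' a b) \<Longrightarrow> T = T'"
  by (intro ext) (metis c2_bvec)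

lemma c2_D: "lin2 D \<Longrightarrow> c2 (D x) a b = pairing (dual_op D a b) x"
proof -
  assume l: "lin2 D"
  have "c2 (D x) a b = (\<Sum>i\<in>UNIV. \<Sum>j\<in>UNIV. a i * b j * (\<Sum>k\<in>UNIV. x k * D (bvec k) i j))"
    by (simp only: c2_def lin2_expand[OF l, of x])
  also have "\<dots> = (\<Sum>i\<in>UNIV. \<Sum>j\<in>UNIV. \<Sum>k\<in>UNIV. a i * b j * D (bvec k) i j * x k)"
    by (simp only: sum_distrib_left mult_ac)
  also have "\<dots> = (\<Sum>i\<in>UNIV. \<Sum>k\<in>UNIV. \<Sum>j\<in>UNIV. a i * b j * D (bvec k) i j * x k)"
    by (rule sum.cong, rule refl, rule sum.swap)
  also have "\<dots> = (\<Sum>k\<in>UNIV. \<Sum>i\<in>UNIV. \<Sum>j\<in>UNIV. a i * b j * D (bvec k) i j * x k)"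
    by (rule sum.swap)
  also have "\<dots> = (\<Sum>k\<in>UNIV. (\<Sum>i\<in>UNIV. \<Sum>j\<in>UNIV. a i * b j * D (bvec k) i j) * x k)"
    by (simp only: sum_distrib_right)
  finally show ?thesis by (simp add: pairing_def dual_op_def)
qed


lemma bilin_addL: "bilin b \<Longrightarrow> b (x + y) z = b x z + b y z"
  using lin_add[of "\<lambda>u. b u z"] by (simp add: bilin_def)
lemma bilin_addR: "bilin b \<Longrightarrow> b z (x + y) = b z x + b z y"
  using lin_add[of "b z"] by (simp add: bilin_def)
lemma bilin_diffL: "bilin b \<Longrightarrow> b (x - y) z = b x z - b y z"
  using lin_diff[of "\<lambda>u. b u z"] by (simp add: bilin_def)
lemma bilin_diffR: "bilin b \<Longrightarrow> b z (x - y) = b z x - b z y"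
  using lin_diff[of "b z"] by (simp add: bilin_def)
lemma bilin_negL: "bilin b \<Longrightarrow> b (- x) z = - b x z"
  using lin_neg[of "\<lambda>u. b u z"] by (simp add: bilin_def)
lemma bilin_negR: "bilin b \<Longrightarrow> b z (- x) = - b z x"
  using lin_neg[of "b z"] by (simp add: bilin_def)
lemma bilin_zeroL: "bilin b \<Longrightarrow> b 0 z = 0"
  using lin_zero[of "\<lambda>u. b u z"] by (simp add: bilin_def)
lemma bilin_zeroR: "bilin b \<Longrightarrow> b z 0 = 0"
  using lin_zero[of "b z"] by (simp add: bilin_def)
lemma bilin_smultL: "bilin b \<Longrightarrow> b (smult_v c x) z = smult_v c (b x z)"
  using lin_smult[of "\<lambda>u. b u z"] by (simp add: bilin_def)
lemma bilin_smultR: "bilin b \<Longrightarrow> b z (smult_v c x) = smult_v c (b z x)"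
  using lin_smult[of "b z"] by (simp add: bilin_def)
lemma bilin_linL: "bilin b \<Longrightarrow> lin (\<lambda>u. b u z)" by (simp add: bilin_def)
lemma bilin_linR: "bilin b \<Longrightarrow> lin (b z)" by (simp add: bilin_def)

lemmas bilin_simps = bilin_addL bilin_addR bilin_diffL bilin_diffR bilin_negL bilin_negR bilin_zeroL bilin_zeroR

definition mlin :: "(('i \<Rightarrow> 'k::field) \<Rightarrow> ('i \<Rightarrow> 'k) \<Rightarrow> ('i \<Rightarrow> 'k)) \<Rightarrow> ('i \<Rightarrow> 'k) \<Rightarrow> ('i \<Rightarrow> 'k) \<Rightarrow> ('i \<Rightarrow> 'k) \<Rightarrow> ('i \<Rightarrow> 'k) \<Rightarrow> ('i \<Rightarrow> 'k)" where
  "mlin br x w y z = jacobiator br x y (br w z) + jacobiator br w y (br x z) - br (jacobiator br x y z) w - br (jacobiator br w y z) x"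

lemma sagle_comb:
  fixes br :: "('i \<Rightarrow> 'k::field) \<Rightarrow> ('i \<Rightarrow> 'k) \<Rightarrow> ('i \<Rightarrow> 'k)" and a b c d :: "'i \<Rightarrow> 'k"
  assumes anti: "\<And>x y. br x y = - br y x"
    and negL: "\<And>x y. br (- x) y = - br x y" and negR: "\<And>x y. br x (- y) = - br x y"
    and addL: "\<And>x y z. br (x + y) z = br x z + br y z" and addR: "\<And>x y z. br x (y + z) = br x y + br x z"
    and diffL: "\<And>x y z. br (x - y) z = br x z - br y z" and diffR: "\<And>x y z. br x (y - z) = br x y - br x z"
  shows "(br (br a c) (br b d) - br (br (br a b) c) d - br (br (br d a) b) c - br (br (br c d) a) b - br (br (br b c) d) a) + (br (br a c) (br b d) - br (br (br a b) c) d - br (br (br d a) b) c - br (br (br c d) a) b - br (br (br b c) d) a) = mlin br a b c d - mlin br a c d b + mlin br a d b c"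
proof -
  have i0: "br (b) (a) = - br (a) (b)" by (rule anti)
  have i1: "br (c) (a) = - br (a) (c)" by (rule anti)
  have i2: "br (c) (b) = - br (b) (c)" by (rule anti)
  have i3: "br (d) (a) = - br (a) (d)" by (rule anti)
  have i4: "br (d) (b) = - br (b) (d)" by (rule anti)
  have i5: "br (d) (c) = - br (c) (d)" by (rule anti)
  have i6: "br (br (a) (b)) (c) = - br (c) (br (a) (b))" by (rule anti)
  have i7: "br (br (a) (b)) (d) = - br (d) (br (a) (b))" by (rule anti)
  have i8: "br (br (a) (c)) (b) = - br (b) (br (a) (c))" by (rule anti)
  have i9: "br (br (a) (c)) (d) = - br (d) (br (a) (c))" by (rule anti)
  have i10: "br (br (a) (d)) (b) = - br (b) (br (a) (d))" by (rule anti)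
  have i11: "br (br (a) (d)) (c) = - br (c) (br (a) (d))" by (rule anti)
  have i12: "br (br (a) (br (b) (c))) (d) = - br (d) (br (a) (br (b) (c)))" by (rule anti)
  have i13: "br (br (a) (br (b) (d))) (c) = - br (c) (br (a) (br (b) (d)))" by (rule anti)
  have i14: "br (br (a) (br (c) (d))) (b) = - br (b) (br (a) (br (c) (d)))" by (rule anti)
  have i15: "br (br (b) (c)) (a) = - br (a) (br (b) (c))" by (rule anti)
  have i16: "br (br (b) (c)) (d) = - br (d) (br (b) (c))" by (rule anti)
  have i17: "br (br (b) (c)) (br (a) (d)) = - br (br (a) (d)) (br (b) (c))" by (rule anti)
  have i18: "br (br (b) (d)) (a) = - br (a) (br (b) (d))" by (rule anti)
  have i19: "br (br (b) (d)) (c) = - br (c) (br (b) (d))" by (rule anti)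
  have i20: "br (br (b) (d)) (br (a) (c)) = - br (br (a) (c)) (br (b) (d))" by (rule anti)
  have i21: "br (br (b) (br (a) (c))) (d) = - br (d) (br (b) (br (a) (c)))" by (rule anti)
  have i22: "br (br (b) (br (a) (d))) (c) = - br (c) (br (b) (br (a) (d)))" by (rule anti)
  have i23: "br (br (b) (br (c) (d))) (a) = - br (a) (br (b) (br (c) (d)))" by (rule anti)
  have i24: "br (br (c) (d)) (a) = - br (a) (br (c) (d))" by (rule anti)
  have i25: "br (br (c) (d)) (b) = - br (b) (br (c) (d))" by (rule anti)
  have i26: "br (br (c) (d)) (br (a) (b)) = - br (br (a) (b)) (br (c) (d))" by (rule anti)
  have i27: "br (br (c) (br (a) (b))) (d) = - br (d) (br (c) (br (a) (b)))" by (rule anti)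
  have i28: "br (br (c) (br (a) (d))) (b) = - br (b) (br (c) (br (a) (d)))" by (rule anti)
  have i29: "br (br (c) (br (b) (d))) (a) = - br (a) (br (c) (br (b) (d)))" by (rule anti)
  have i30: "br (br (d) (br (a) (b))) (c) = - br (c) (br (d) (br (a) (b)))" by (rule anti)
  have i31: "br (br (d) (br (a) (c))) (b) = - br (b) (br (d) (br (a) (c)))" by (rule anti)
  have i32: "br (br (d) (br (b) (c))) (a) = - br (a) (br (d) (br (b) (c)))" by (rule anti)
  show ?thesis unfolding mlin_def jacobiator_def
    by (simp only: addL addR diffL diffR negL negR i0 i1 i2 i3 i4 i5 i6 i7 i8 i9 i10 i11 i12 i13 i14 i15 i16 i17 i18 i19 i20 i21 i22 i23 i24 i25 i26 i27 i28 i29 i30 i31 i32) (simp add: algebra_simps)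
qed

lemma malcev_lin:
  assumes m: "malcev_alg br"
  shows "mlin br x w y z = 0"
proof -
  have b: "bilin br" using m unfolding malcev_alg_def by blast
  have MM: "\<forall>x y z. jacobiator br x y (br x z) = br (jacobiator br x y z) x"
    using m unfolding malcev_alg_def by blast
  have M: "jacobiator br u y (br u z) - br (jacobiator br u y z) u = 0" for u
    using MM[rule_format, of u y z] by simp
  have "mlin br x w y z = (jacobiator br (x + w) y (br (x + w) z) - br (jacobiator br (x + w) y z) (x + w))
     - (jacobiator br x y (br x z) - br (jacobiator br x y z) x) - (jacobiator br w y (br w z) - br (jacobiator br w y z) w)"
    unfolding mlin_def jacobiator_def
    by (simp only: bilin_addL[OF b] bilin_addR[OF b]) (simp add: algebra_simps)
  then show ?thesis by (simp only: M) simp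
qed

lemma two_eq_zero: "(v::'i \<Rightarrow> 'k::field_char_0) + v = 0 \<Longrightarrow> v = 0"
proof (rule ext)
  fix i assume "v + v = 0"
  then have "v i + v i = 0" by (metis plus_fun_apply zero_fun_apply)
  then have "2 * v i = 0" by simp
  then show "v i = 0 i" by simp
qed

lemma sagle:
  fixes br :: "('i \<Rightarrow> 'k::field_char_0) \<Rightarrow> ('i \<Rightarrow> 'k) \<Rightarrow> ('i \<Rightarrow> 'k)"
  assumes m: "malcev_alg br"
  shows "br (br a c) (br b d) = br (br (br a b) c) d + br (br (br d a) b) c + br (br (br c d) a) b + br (br (br b c) d) a"
proof -
  have b: "bilin br" and anti: "\<And>x y. br x y = - br y x" using m unfolding malcev_alg_def by blast+
  let ?S = "br (br a c) (br b d) - br (br (br a b) c) d - br (br (br d a) b) c - br (br (br c d) a) b - br (br (br b c) d) a"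
  have "?S + ?S = 0"
    by (subst sagle_comb[OF anti bilin_negL[OF b] bilin_negR[OF b] bilin_addL[OF b] bilin_addR[OF b] bilin_diffL[OF b] bilin_diffR[OF b]])
       (simp add: malcev_lin[OF m])
  then have "?S = 0" by (rule two_eq_zero)
  then show ?thesis by (simp add: algebra_simps)
qed

lemma ad_comb:
  fixes br :: "('i \<Rightarrow> 'k::field) \<Rightarrow> ('i \<Rightarrow> 'k) \<Rightarrow> ('i \<Rightarrow> 'k)" and a b c d :: "'i \<Rightarrow> 'k"
  assumes anti: "\<And>x y. br x y = - br y x"
    and negL: "\<And>x y. br (- x) y = - br x y" and negR: "\<And>x y. br x (- y) = - br x y"
    and addL: "\<And>x y z. br (x + y) z = br x z + br y z" and addR: "\<And>x y z. br x (y + z) = br x y + br x z"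
    and diffL: "\<And>x y z. br (x - y) z = br x z - br y z" and diffR: "\<And>x y z. br x (y - z) = br x y - br x z"
  shows "(br (br (br a b) c) d - br a (br b (br c d)) + br c (br a (br b d)) + br (br b c) (br a d) + br b (br (br a c) d)) + (br (br (br a b) c) d - br a (br b (br c d)) + br c (br a (br b d)) + br (br b c) (br a d) + br b (br (br a c) d)) = mlin br a b c d + mlin br a c d b - mlin br a d b c"
proof -
  have i0: "br (b) (a) = - br (a) (b)" by (rule anti)
  have i1: "br (c) (a) = - br (a) (c)" by (rule anti)
  have i2: "br (c) (b) = - br (b) (c)" by (rule anti)
  have i3: "br (d) (a) = - br (a) (d)" by (rule anti)
  have i4: "br (d) (b) = - br (b) (d)" by (rule anti)
  have i5: "br (d) (c) = - br (c) (d)" by (rule anti)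
  have i6: "br (br (a) (b)) (c) = - br (c) (br (a) (b))" by (rule anti)
  have i7: "br (br (a) (b)) (d) = - br (d) (br (a) (b))" by (rule anti)
  have i8: "br (br (a) (c)) (b) = - br (b) (br (a) (c))" by (rule anti)
  have i9: "br (br (a) (c)) (d) = - br (d) (br (a) (c))" by (rule anti)
  have i10: "br (br (a) (d)) (b) = - br (b) (br (a) (d))" by (rule anti)
  have i11: "br (br (a) (d)) (c) = - br (c) (br (a) (d))" by (rule anti)
  have i12: "br (br (a) (br (b) (c))) (d) = - br (d) (br (a) (br (b) (c)))" by (rule anti)
  have i13: "br (br (a) (br (b) (d))) (c) = - br (c) (br (a) (br (b) (d)))" by (rule anti)
  have i14: "br (br (a) (br (c) (d))) (b) = - br (b) (br (a) (br (c) (d)))" by (rule anti)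
  have i15: "br (br (b) (c)) (a) = - br (a) (br (b) (c))" by (rule anti)
  have i16: "br (br (b) (c)) (d) = - br (d) (br (b) (c))" by (rule anti)
  have i17: "br (br (b) (c)) (br (a) (d)) = - br (br (a) (d)) (br (b) (c))" by (rule anti)
  have i18: "br (br (b) (d)) (a) = - br (a) (br (b) (d))" by (rule anti)
  have i19: "br (br (b) (d)) (c) = - br (c) (br (b) (d))" by (rule anti)
  have i20: "br (br (b) (d)) (br (a) (c)) = - br (br (a) (c)) (br (b) (d))" by (rule anti)
  have i21: "br (br (b) (br (a) (c))) (d) = - br (d) (br (b) (br (a) (c)))" by (rule anti)
  have i22: "br (br (b) (br (a) (d))) (c) = - br (c) (br (b) (br (a) (d)))" by (rule anti)
  have i23: "br (br (b) (br (c) (d))) (a) = - br (a) (br (b) (br (c) (d)))" by (rule anti)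
  have i24: "br (br (c) (d)) (a) = - br (a) (br (c) (d))" by (rule anti)
  have i25: "br (br (c) (d)) (b) = - br (b) (br (c) (d))" by (rule anti)
  have i26: "br (br (c) (d)) (br (a) (b)) = - br (br (a) (b)) (br (c) (d))" by (rule anti)
  have i27: "br (br (c) (br (a) (b))) (d) = - br (d) (br (c) (br (a) (b)))" by (rule anti)
  have i28: "br (br (c) (br (a) (d))) (b) = - br (b) (br (c) (br (a) (d)))" by (rule anti)
  have i29: "br (br (c) (br (b) (d))) (a) = - br (a) (br (c) (br (b) (d)))" by (rule anti)
  have i30: "br (br (d) (br (a) (b))) (c) = - br (c) (br (d) (br (a) (b)))" by (rule anti)
  have i31: "br (br (d) (br (a) (c))) (b) = - br (b) (br (d) (br (a) (c)))" by (rule anti)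
  have i32: "br (br (d) (br (b) (c))) (a) = - br (a) (br (d) (br (b) (c)))" by (rule anti)
  show ?thesis unfolding mlin_def jacobiator_def
    by (simp only: addL addR diffL diffR negL negR i0 i1 i2 i3 i4 i5 i6 i7 i8 i9 i10 i11 i12 i13 i14 i15 i16 i17 i18 i19 i20 i21 i22 i23 i24 i25 i26 i27 i28 i29 i30 i31 i32) (simp add: algebra_simps)
qed

lemma ad_ident:
  fixes br :: "('i \<Rightarrow> 'k::field_char_0) \<Rightarrow> ('i \<Rightarrow> 'k) \<Rightarrow> ('i \<Rightarrow> 'k)"
  assumes m: "malcev_alg br"
  shows "br (br (br a b) c) d = br a (br b (br c d)) - br c (br a (br b d)) - br (br b c) (br a d) - br b (br (br a c) d)"
proof -
  have b: "bilin br" and anti: "\<And>x y. br x y = - br y x" using m unfolding malcev_alg_def by blast+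
  let ?S = "(br (br (br a b) c) d - br a (br b (br c d)) + br c (br a (br b d)) + br (br b c) (br a d) + br b (br (br a c) d))"
  have "?S + ?S = 0"
    by (subst ad_comb[OF anti bilin_negL[OF b] bilin_negR[OF b] bilin_addL[OF b] bilin_addR[OF b] bilin_diffL[OF b] bilin_diffR[OF b]])
       (simp add: malcev_lin[OF m])
  then have "?S = 0" by (rule two_eq_zero)
  then show ?thesis by (simp add: algebra_simps)
qed

lemma smult_v_apply: "smult_v c x k = c * x k" by (simp add: smult_v_def)

lemma bilin_coad: "bilin \<theta> \<Longrightarrow> bilin (coad \<theta>)"
proof -
  assume b: "bilin \<theta>"
  have 1: "lin (coad \<theta> x)" for x
    unfolding lin_def by (auto simp: coad_def smult_v_apply fun_eq_iff)
  have 2: "lin (\<lambda>x. coad \<theta> x \<xi>)" for \<xi>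
    unfolding lin_def by (auto simp: coad_def smult_v_apply fun_eq_iff bilin_addL[OF b] bilin_smultL[OF b])
  show ?thesis using 1 2 by (simp add: bilin_def)
qed

lemma coad_rep:
  fixes br :: "('i::finite \<Rightarrow> 'k::field_char_0) \<Rightarrow> ('i \<Rightarrow> 'k) \<Rightarrow> ('i \<Rightarrow> 'k)"
  assumes m: "malcev_alg br"
  shows "malcev_rep br (coad br)"
proof -
  have b: "bilin br" using m unfolding malcev_alg_def by blast
  have l: "lin (br z)" for z using b by (simp add: bilin_def)
  have lc: "lin (coad br z)" and lc2: "lin (\<lambda>u. coad br u \<xi>)" for z \<xi> using bilin_coad[OF b] by (simp_all add: bilin_def)
  show ?thesis unfolding malcev_rep_def
  proof (intro conjI allI)
    show "bilin (coad br)" by (rule bilin_coad[OF b])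
    fix x y z v
    show "coad br (br (br x y) z) v =
        coad br z (coad br y (coad br x v)) - coad br y (coad br x (coad br z v)) + coad br x (coad br (br y z) v) + coad br (br x z) (coad br y v)"
    proof (rule vec_eqI_pair)
      fix w
      show "pairing (coad br (br (br x y) z) v) w = pairing (coad br z (coad br y (coad br x v)) - coad br y (coad br x (coad br z v)) + coad br x (coad br (br y z) v) + coad br (br x z) (coad br y v)) w"
        by (simp add: coad_pair l ad_ident[OF m, of x y z w])
    qed
  qed
qed


lemma pairing_neg_lam[simp]: "pairing (\<lambda>a. - f a) w = - pairing f w"
  by (simp add: pairing_def sum_negf)
lemma pairing_neg_lam'[simp]: "pairing w (\<lambda>a. - f a) = - pairing w f"
  by (simp add: pairing_def sum_negf)

lemma mpa_parts:
  assumes "malcev_poisson_alg br pr"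
  shows "malcev_alg br" "bilin br" "bilin pr" "\<And>x y. br x y = - br y x" "\<And>x y. pr x y = pr y x"
    "\<And>x y z. pr (pr x y) z = pr x (pr y z)" "\<And>x y z. br x (pr y z) = pr (br x y) z + pr y (br x z)"
  using assms unfolding malcev_poisson_alg_def malcev_alg_def by blast+

lemma assoc_rep_auto:
  fixes br pr :: "('i::finite \<Rightarrow> 'k::field_char_0) \<Rightarrow> ('i \<Rightarrow> 'k) \<Rightarrow> ('i \<Rightarrow> 'k)"
  assumes m: "malcev_poisson_alg br pr"
  shows "assoc_rep pr (\<lambda>x \<xi>. - coad pr x \<xi>)"
proof -
  note P = mpa_parts[OF m]
  have l: "lin (pr z)" for z using P(3) by (simp add: bilin_def)
  have bc: "bilin (coad pr)" by (rule bilin_coad[OF P(3)])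
  have lc: "lin (coad pr z)" for z using bc by (simp add: bilin_def)
  have bm: "bilin (\<lambda>x \<xi>. - coad pr x \<xi>)"
    using bc unfolding bilin_def lin_def by (simp add: smult_v_def fun_eq_iff)
  have e: "pr (pr x y) w = pr y (pr x w)" for x y w using P(5)[of x y] P(6) by simp
  show ?thesis unfolding assoc_rep_def
  proof (intro conjI allI)
    show "bilin (\<lambda>x \<xi>. - coad pr x \<xi>)" by (rule bm)
    fix x y v
    show "- coad pr (pr x y) v = - coad pr x (- coad pr y v)"
      by (rule vec_eqI_pair) (simp add: coad_pair l lc lin_neg e)
  qed
qed

lemma mp_rep_auto:
  fixes br pr :: "('i::finite \<Rightarrow> 'k::field_char_0) \<Rightarrow> ('i \<Rightarrow> 'k) \<Rightarrow> ('i \<Rightarrow> 'k)"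
  assumes m: "malcev_poisson_alg br pr"
  shows "mp_rep br pr (coad br) (\<lambda>x \<xi>. - coad pr x \<xi>)"
proof -
  note P = mpa_parts[OF m]
  have l: "lin (pr z)" "lin (br z)" for z using P(2,3) by (simp_all add: bilin_def)
  have lc: "lin (coad pr z)" "lin (coad br z)" for z using bilin_coad[OF P(3)] bilin_coad[OF P(2)] by (simp_all add: bilin_def)
  have X: "br (pr x y) w = br x (pr y w) + br y (pr x w)" for x y w
  proof -
    have "br x (pr y w) + br y (pr x w) = pr (br x y) w + pr y (br x w) + (pr (br y x) w + pr x (br y w))"
      using P(7) by simp
    also have "\<dots> = pr y (br x w) + pr x (br y w)"
      using P(4)[of y x] by (simp add: bilin_negL[OF P(3)])
    also have "\<dots> = - br w (pr x y)"
      using P(7)[of w x y] P(4)[of x w] P(4)[of y w] P(5) by (simp add: bilin_negL[OF P(3)] bilin_negR[OF P(3)])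
    also have "\<dots> = br (pr x y) w" using P(4)[of "pr x y" w] by simp
    finally show ?thesis by simp
  qed
  have Y: "pr (br x y) w = - pr y (br x w) + br x (pr y w)" for x y w
    using P(7)[of x y w] by simp
  show ?thesis unfolding mp_rep_def
  proof (intro conjI allI)
    show "malcev_rep br (coad br)" by (rule coad_rep[OF P(1)])
    show "assoc_rep pr (\<lambda>x \<xi>. - coad pr x \<xi>)" by (rule assoc_rep_auto[OF m])
    fix x y v
    show "coad br (pr x y) v = - coad pr y (coad br x v) + - coad pr x (coad br y v)"
      by (rule vec_eqI_pair) (simp add: coad_pair l lc lin_neg X)
    show "- coad pr (br x y) v = coad br x (- coad pr y v) - - coad pr y (coad br x v)"
      by (rule vec_eqI_pair) (simp add: coad_pair l lc lin_neg Y)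
  qed
qed


lemma sumlin: "lin f \<Longrightarrow> (\<Sum>b\<in>UNIV. (\<eta>::'j::finite \<Rightarrow> 'k) b * pairing (f (bvec b)) x) = pairing (f \<eta>) (x::'i::finite \<Rightarrow> 'k::field)"
proof -
  assume l: "lin f"
  have "pairing (f \<eta>) x = (\<Sum>i\<in>UNIV. (\<Sum>b\<in>UNIV. \<eta> b * f (bvec b) i) * x i)"
    unfolding pairing_def by (simp only: lin_expand[OF l, of \<eta>])
  also have "\<dots> = (\<Sum>i\<in>UNIV. \<Sum>b\<in>UNIV. \<eta> b * (f (bvec b) i * x i))"
    by (simp only: sum_distrib_right mult.assoc)
  also have "\<dots> = (\<Sum>b\<in>UNIV. \<Sum>i\<in>UNIV. \<eta> b * (f (bvec b) i * x i))"
    by (rule sum.swap)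
  also have "\<dots> = (\<Sum>b\<in>UNIV. \<eta> b * pairing (f (bvec b)) x)"
    by (simp only: sum_distrib_left pairing_def)
  finally show ?thesis by simp
qed

lemma sumlin': "lin f \<Longrightarrow> (\<Sum>b\<in>UNIV. pairing (f (bvec b)) x * (\<eta>::'j::finite \<Rightarrow> 'k) b) = pairing (f \<eta>) (x::'i::finite \<Rightarrow> 'k::field)"
  using sumlin[of f \<eta> x] by (simp add: mult.commute)

lemma lin_comp: "lin f \<Longrightarrow> lin g \<Longrightarrow> lin (\<lambda>u. f (g u))"
  unfolding lin_def by simp

lemma bvec_dual: "D (bvec a) i j = dual_op D (bvec i) (bvec j) a"
  by (simp add: dual_op_bvec)

context
  fixes Delta delta :: "('n::finite \<Rightarrow> 'k::field_char_0) \<Rightarrow> ('n \<Rightarrow> 'n \<Rightarrow> 'k)"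
  assumes lD: "lin2 Delta" and ld: "lin2 delta"
    and mpd: "malcev_poisson_alg (dual_op delta) (dual_op Delta)"
begin

abbreviation "PP \<equiv> dual_op Delta"
abbreviation "BB \<equiv> dual_op delta"

lemma PB_parts: "malcev_alg BB" "bilin BB" "bilin PP" "\<And>x y. BB x y = - BB y x" "\<And>x y. PP x y = PP y x"
    "\<And>x y z. PP (PP x y) z = PP x (PP y z)" "\<And>x y z. BB x (PP y z) = PP (BB x y) z + PP y (BB x z)"
  using mpa_parts[OF mpd] by blast+

lemma linP: "lin (PP z)" "lin (\<lambda>u. PP u z)" "lin (BB z)" "lin (\<lambda>u. BB u z)"
  using PB_parts(2,3) by (simp_all add: bilin_def)

lemma coassoc: "tens_id_F Delta (Delta x) = tens_F_id Delta (Delta x)"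
proof (intro ext)
  fix i j k
  have "tens_id_F Delta (Delta x) i j k = pairing (PP (bvec i) (PP (bvec j) (bvec k))) x"
    unfolding tens_id_F_def
    apply (simp only: Dcoef[OF lD, of x] bvec_dual[of Delta])
    by (rule sumlin'[OF linP(1)])
  moreover have "tens_F_id Delta (Delta x) i j k = pairing (PP (PP (bvec i) (bvec j)) (bvec k)) x"
    unfolding tens_F_id_def
    apply (simp only: Dcoef[OF lD, of x] bvec_dual[of Delta])
    by (rule sumlin'[OF linP(2)])
  ultimately show "tens_id_F Delta (Delta x) i j k = tens_F_id Delta (Delta x) i j k"
    by (simp add: PB_parts(6))
qed

lemma Dsym: "swap2 (Delta x) = Delta x"
  by (intro ext) (simp add: swap2_def Dcoef[OF lD, of x] PB_parts(5))

lemma dasym: "swap2 (delta x) = - delta x"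
proof (intro ext)
  fix i j
  show "swap2 (delta x) i j = (- delta x) i j"
    using PB_parts(4)[of "bvec j" "bvec i"] by (simp add: swap2_def Dcoef[OF ld, of x])
qed

lemma coleib: "tens_id_F Delta (delta x) - tens_F_id delta (Delta x) - tau_id (tens_id_F delta (Delta x)) = 0"
proof (intro ext)
  fix i j k
  have 1: "tens_id_F Delta (delta x) i j k = pairing (BB (bvec i) (PP (bvec j) (bvec k))) x"
    unfolding tens_id_F_def
    apply (simp only: Dcoef[OF ld, of x] bvec_dual[of Delta])
    by (rule sumlin'[OF linP(3)])
  have 2: "tens_F_id delta (Delta x) i j k = pairing (PP (BB (bvec i) (bvec j)) (bvec k)) x"
    unfolding tens_F_id_def
    apply (simp only: Dcoef[OF lD, of x] bvec_dual[of delta])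
    by (rule sumlin'[OF linP(2)])
  have 3: "tau_id (tens_id_F delta (Delta x)) i j k = pairing (PP (bvec j) (BB (bvec i) (bvec k))) x"
    unfolding tens_id_F_def tau_id_def
    apply (simp only: Dcoef[OF lD, of x] bvec_dual[of delta])
    by (rule sumlin'[OF linP(1)])
  show "(tens_id_F Delta (delta x) - tens_F_id delta (Delta x) - tau_id (tens_id_F delta (Delta x))) i j k = 0 i j k"
    using 1 2 3 PB_parts(7)[of "bvec i" "bvec j" "bvec k"] by simp
qed

lemma Qval: "tens_F_id_id delta (tens_F_id delta (delta x)) i j k l = pairing (BB (BB (BB (bvec i) (bvec j)) (bvec k)) (bvec l)) x"
proof -
  have lin3: "lin (\<lambda>u. BB (BB u (bvec k)) (bvec l))"
    by (rule lin_comp[OF linP(4) linP(4)])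
  have 1: "tens_F_id delta (delta x) a k l = pairing (BB (BB (bvec a) (bvec k)) (bvec l)) x" for a
    unfolding tens_F_id_def
    apply (simp only: Dcoef[OF ld, of x] bvec_dual[of delta])
    by (rule sumlin'[OF linP(4)])
  show ?thesis
    unfolding tens_F_id_id_def
    apply (simp only: 1 bvec_dual[of delta])
    by (rule sumlin'[OF lin3])
qed

lemma Lval: "id_tau_id (tens_F_G delta delta (delta x)) i j k l = pairing (BB (BB (bvec i) (bvec k)) (BB (bvec j) (bvec l))) x"
proof -
  let ?U = "BB (bvec i) (bvec k)" and ?V = "BB (bvec j) (bvec l)"
  have "id_tau_id (tens_F_G delta delta (delta x)) i j k l =
      (\<Sum>a\<in>UNIV. \<Sum>b\<in>UNIV. pairing (BB (bvec a) (bvec b)) x * ?U a * ?V b)"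
    unfolding id_tau_id_def tens_F_G_def by (simp only: Dcoef[OF ld, of x] bvec_dual[of delta])
  also have "\<dots> = (\<Sum>a\<in>UNIV. ?U a * (\<Sum>b\<in>UNIV. ?V b * pairing (BB (bvec a) (bvec b)) x))"
    by (simp only: sum_distrib_left mult_ac)
  also have "\<dots> = (\<Sum>a\<in>UNIV. ?U a * pairing (BB (bvec a) ?V) x)"
    by (simp only: sumlin[OF linP(3)])
  also have "\<dots> = pairing (BB ?U ?V) x"
    by (rule sumlin[OF linP(4)])
  finally show ?thesis .
qed

lemma comalcev: "let Q = tens_F_id_id delta (tens_F_id delta (delta x)) in
          id_tau_id (tens_F_G delta delta (delta x))
            = Q + sigma4 Q + sigma4 (sigma4 Q) + sigma4 (sigma4 (sigma4 Q))"
  unfolding Let_def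
proof (intro ext)
  fix i j k l
  show "id_tau_id (tens_F_G delta delta (delta x)) i j k l =
         (tens_F_id_id delta (tens_F_id delta (delta x)) + sigma4 (tens_F_id_id delta (tens_F_id delta (delta x))) +
          sigma4 (sigma4 (tens_F_id_id delta (tens_F_id delta (delta x)))) +
          sigma4 (sigma4 (sigma4 (tens_F_id_id delta (tens_F_id delta (delta x)))))) i j k l"
    by (simp add: sigma4_def Qval Lval sagle[OF PB_parts(1), where a="bvec i" and b="bvec j" and c="bvec k" and d="bvec l"])
qed

lemma coalg: "mp_coalg Delta delta"
  unfolding mp_coalg_def using lD ld Dsym coassoc dasym comalcev coleib by blast

end


lemma sum_perm4: "(\<Sum>i\<in>A. \<Sum>j\<in>B. \<Sum>p\<in>C. \<Sum>q\<in>D. f i j p q) = (\<Sum>p\<in>C. \<Sum>q\<in>D. \<Sum>i\<in>A. \<Sum>j\<in>B. f i j p q)"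
proof -
  have "(\<Sum>i\<in>A. \<Sum>j\<in>B. \<Sum>p\<in>C. \<Sum>q\<in>D. f i j p q) = (\<Sum>i\<in>A. \<Sum>p\<in>C. \<Sum>j\<in>B. \<Sum>q\<in>D. f i j p q)"
    by (rule sum.cong[OF refl], rule sum.swap)
  also have "\<dots> = (\<Sum>i\<in>A. \<Sum>p\<in>C. \<Sum>q\<in>D. \<Sum>j\<in>B. f i j p q)"
    by (rule sum.cong[OF refl], rule sum.cong[OF refl], rule sum.swap)
  also have "\<dots> = (\<Sum>p\<in>C. \<Sum>i\<in>A. \<Sum>q\<in>D. \<Sum>j\<in>B. f i j p q)"
    by (rule sum.swap)
  also have "\<dots> = (\<Sum>p\<in>C. \<Sum>q\<in>D. \<Sum>i\<in>A. \<Sum>j\<in>B. f i j p q)"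
    by (rule sum.cong[OF refl], rule sum.swap)
  finally show ?thesis .
qed

lemma c2_tens2: "c2 (tens2 f g T) a b = c2 T (\<lambda>p. pairing a (f (bvec p))) (\<lambda>q. pairing b (g (bvec q)))"
proof -
  have "c2 (tens2 f g T) a b = (\<Sum>i\<in>UNIV. \<Sum>j\<in>UNIV. \<Sum>p\<in>UNIV. \<Sum>q\<in>UNIV. a i * b j * T p q * f (bvec p) i * g (bvec q) j)"
    unfolding c2_def tens2_def by (simp only: sum_distrib_left mult_ac)
  also have "\<dots> = (\<Sum>p\<in>UNIV. \<Sum>q\<in>UNIV. \<Sum>i\<in>UNIV. \<Sum>j\<in>UNIV. a i * b j * T p q * f (bvec p) i * g (bvec q) j)"
    by (rule sum_perm4)
  also have "\<dots> = (\<Sum>p\<in>UNIV. \<Sum>q\<in>UNIV. \<Sum>j\<in>UNIV. \<Sum>i\<in>UNIV. a i * b j * T p q * f (bvec p) i * g (bvec q) j)"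
    by (rule sum.cong[OF refl], rule sum.cong[OF refl], rule sum.swap)
  also have "\<dots> = c2 T (\<lambda>p. pairing a (f (bvec p))) (\<lambda>q. pairing b (g (bvec q)))"
    unfolding c2_def pairing_def by (simp only: sum_distrib_left sum_distrib_right mult_ac)
  finally show ?thesis .
qed

lemma c2_add: "c2 (T + T') a b = c2 T a b + c2 T' a b"
  by (simp add: c2_def distrib_left sum.distrib)
lemma c2_diff: "c2 (T - T') a b = c2 T a b - c2 T' a b"
  by (simp add: c2_def right_diff_distrib sum_subtractf)
lemma c2_zero: "c2 0 a b = 0"
  by (simp add: c2_def)

lemma tens_eq0_iff: "(T = 0) \<longleftrightarrow> (\<forall>a b. c2 T a b = 0)"
  using c2_eqI[of T 0] by (auto simp: c2_zero)

lemma tens_eq_iff: "(T = T') \<longleftrightarrow> (\<forall>a b. c2 T a b = c2 T' a b)"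
  using c2_eqI[of T T'] by auto

lemma lam_pair_coad: "(\<lambda>p. pairing a (\<theta> x (bvec p))) = - coad \<theta> x a"
  by (simp add: coad_def fun_eq_iff)

lemma lam_pair_id: "(\<lambda>p. pairing a (id (bvec p))) = (a::'i::finite \<Rightarrow> 'k::field)"
  by (simp add: fun_eq_iff)


lemma vec_eq_iff_pair: "(u = v) \<longleftrightarrow> (\<forall>w. pairing u w = pairing v (w::'i::finite \<Rightarrow> 'k::field))"
  using vec_eqI_pair by auto
lemma vec_eq_iff_pair': "(u = v) \<longleftrightarrow> (\<forall>w. pairing w u = pairing w (v::'i::finite \<Rightarrow> 'k::field))"
  using vec_eqI_pair' by auto

context
  fixes br pr :: "('n::finite \<Rightarrow> 'k::field_char_0) \<Rightarrow> ('n \<Rightarrow> 'k) \<Rightarrow> ('n \<Rightarrow> 'k)"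
    and Delta delta :: "('n \<Rightarrow> 'k) \<Rightarrow> ('n \<Rightarrow> 'n \<Rightarrow> 'k)"
  assumes mpa: "malcev_poisson_alg br pr"
    and lD: "lin2 Delta" and ld: "lin2 delta"
    and mpd: "malcev_poisson_alg (dual_op delta) (dual_op Delta)"
begin

abbreviation "PQ \<equiv> dual_op Delta"
abbreviation "BQ \<equiv> dual_op delta"

lemmas AP6 = mpa_parts[OF mpa]
lemmas DP6 = mpa_parts[OF mpd]

lemma lins: "lin (pr z)" "lin (br z)" "lin (PQ z)" "lin (BQ z)"
   "lin (\<lambda>u. pr u z)" "lin (\<lambda>u. br u z)" "lin (\<lambda>u. PQ u z)" "lin (\<lambda>u. BQ u z)"
  using AP6(2,3) DP6(2,3) by (simp_all add: bilin_def)

lemma clins: "lin (coad pr z)" "lin (coad br z)" "lin (coad PQ z)" "lin (coad BQ z)"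
   "lin (\<lambda>u. coad pr u z)" "lin (\<lambda>u. coad br u z)" "lin (\<lambda>u. coad PQ u z)" "lin (\<lambda>u. coad BQ u z)"
  using bilin_coad[OF AP6(2)] bilin_coad[OF AP6(3)] bilin_coad[OF DP6(2)] bilin_coad[OF DP6(3)]
  by (simp_all add: bilin_def)

lemmas bilins6 = AP6(3) AP6(2) DP6(3) DP6(2) bilin_coad[OF AP6(3)] bilin_coad[OF AP6(2)] bilin_coad[OF DP6(3)] bilin_coad[OF DP6(2)]
lemmas negs6 = bilins6[THEN bilin_negL] bilins6[THEN bilin_negR]

lemma tpr: "pairing (coad pr x \<xi>) w = - pairing \<xi> (pr x w)" by (rule coad_pair[OF lins(1)])
lemma tbr: "pairing (coad br x \<xi>) w = - pairing \<xi> (br x w)" by (rule coad_pair[OF lins(2)])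
lemma tPQ: "pairing w (coad PQ \<xi> x) = - pairing (PQ \<xi> w) x"
proof -
  have "pairing w (coad PQ \<xi> x) = pairing (coad PQ \<xi> x) w" by (rule pairing_comm)
  also have "\<dots> = - pairing x (PQ \<xi> w)" by (rule coad_pair[OF lins(3)])
  also have "\<dots> = - pairing (PQ \<xi> w) x" by (subst pairing_comm) (rule refl)
  finally show ?thesis .
qed
lemma tBQ: "pairing w (coad BQ \<xi> x) = - pairing (BQ \<xi> w) x"
proof -
  have "pairing w (coad BQ \<xi> x) = pairing (coad BQ \<xi> x) w" by (rule pairing_comm)
  also have "\<dots> = - pairing x (BQ \<xi> w)" by (rule coad_pair[OF lins(4)])
  also have "\<dots> = - pairing (BQ \<xi> w) x" by (subst pairing_comm) (rule refl)
  finally show ?thesis .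
qed

lemma bridge:
  "pairing \<eta> (pr (coad PQ \<xi> x) y) = pairing (PQ \<xi> (coad pr y \<eta>)) x"
  "pairing \<eta> (pr y (coad PQ \<xi> x)) = pairing (PQ \<xi> (coad pr y \<eta>)) x"
  "pairing \<eta> (pr (coad BQ \<xi> x) y) = pairing (BQ \<xi> (coad pr y \<eta>)) x"
  "pairing \<eta> (pr y (coad BQ \<xi> x)) = pairing (BQ \<xi> (coad pr y \<eta>)) x"
  "pairing \<eta> (br y (coad PQ \<xi> x)) = pairing (PQ \<xi> (coad br y \<eta>)) x"
  "pairing \<eta> (br y (coad BQ \<xi> x)) = pairing (BQ \<xi> (coad br y \<eta>)) x"
  "pairing \<eta> (br (coad PQ \<xi> x) y) = - pairing (PQ \<xi> (coad br y \<eta>)) x"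
  "pairing \<eta> (br (coad BQ \<xi> x) y) = - pairing (BQ \<xi> (coad br y \<eta>)) x"
proof -
  have p1: "pairing \<eta> (pr y u) = - pairing (coad pr y \<eta>) u" for u y using tpr by simp
  have p2: "pairing \<eta> (br y u) = - pairing (coad br y \<eta>) u" for u y using tbr by simp
  show "pairing \<eta> (pr (coad PQ \<xi> x) y) = pairing (PQ \<xi> (coad pr y \<eta>)) x"
    by (simp only: AP6(5)[of "coad PQ \<xi> x" y] p1 tPQ minus_minus)
  show "pairing \<eta> (pr y (coad PQ \<xi> x)) = pairing (PQ \<xi> (coad pr y \<eta>)) x"
    by (simp only: p1 tPQ minus_minus)
  show "pairing \<eta> (pr (coad BQ \<xi> x) y) = pairing (BQ \<xi> (coad pr y \<eta>)) x"
    by (simp only: AP6(5)[of "coad BQ \<xi> x" y] p1 tBQ minus_minus)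
  show "pairing \<eta> (pr y (coad BQ \<xi> x)) = pairing (BQ \<xi> (coad pr y \<eta>)) x"
    by (simp only: p1 tBQ minus_minus)
  show "pairing \<eta> (br y (coad PQ \<xi> x)) = pairing (PQ \<xi> (coad br y \<eta>)) x"
    by (simp only: p2 tPQ minus_minus)
  show "pairing \<eta> (br y (coad BQ \<xi> x)) = pairing (BQ \<xi> (coad br y \<eta>)) x"
    by (simp only: p2 tBQ minus_minus)
  show "pairing \<eta> (br (coad PQ \<xi> x) y) = - pairing (PQ \<xi> (coad br y \<eta>)) x"
    by (simp only: AP6(4)[of "coad PQ \<xi> x" y] pairing_neg_right p2 tPQ minus_minus)
  show "pairing \<eta> (br (coad BQ \<xi> x) y) = - pairing (BQ \<xi> (coad br y \<eta>)) x"
    by (simp only: AP6(4)[of "coad BQ \<xi> x" y] pairing_neg_right p2 tBQ minus_minus)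
qed

lemma orient: "BQ a (coad \<theta> y b) = - BQ (coad \<theta> y b) a" "PQ a (coad \<theta> y b) = PQ (coad \<theta> y b) a"
  using DP6(4,5) by blast+

lemmas norm_simps = negs6 tpr tbr tPQ tBQ bridge c2_add c2_diff c2_tens2 c2_D[OF lD] c2_D[OF ld] lam_pair_coad lam_pair_id

definition "Cp \<longleftrightarrow> (\<forall>x y a b. pairing (PQ a b) (pr x y) + pairing (PQ (coad pr x a) b) y + pairing (PQ a (coad pr y b)) x = 0)"

lemma C_iff: "(\<forall>x y. Delta (pr x y) = tens2 (pr x) id (Delta y) + tens2 id (pr y) (Delta x)) \<longleftrightarrow> Cp"
  unfolding Cp_def tens_eq_iff by (simp add: norm_simps algebra_simps eq_neg_iff_add_eq_0)

lemma M1_iff: "(\<forall>x1 x2 y2. - coad pr x1 (PQ x2 y2) = PQ (- coad pr x1 x2) y2 + - coad pr (- coad PQ x2 x1) y2) \<longleftrightarrow> Cp"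
  unfolding Cp_def vec_eq_iff_pair by (simp add: norm_simps algebra_simps eq_neg_iff_add_eq_0) blast

lemma M2_iff: "(\<forall>x2 x1 y1. - coad PQ x2 (pr x1 y1) = pr (- coad PQ x2 x1) y1 + - coad PQ (- coad pr x1 x2) y1) \<longleftrightarrow> Cp"
  unfolding Cp_def vec_eq_iff_pair' by (simp add: norm_simps algebra_simps eq_neg_iff_add_eq_0) blast


lemma neg_eq_iff_add: "(- a = b) \<longleftrightarrow> (a + b = (0::'a::ab_group_add))"
  by (metis add.commute add_eq_0_iff)

definition "E1p \<longleftrightarrow> (\<forall>x y a b. pairing (BQ a b) (pr x y) - pairing (PQ (coad br y a) b) x - pairing (BQ (coad pr x b) a) y
     - pairing (PQ (coad br x a) b) y - pairing (BQ (coad pr y b) a) x = 0)"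

definition "E2p \<longleftrightarrow> (\<forall>x y a b. pairing (PQ a b) (br x y) + pairing (BQ (coad pr y a) b) x + pairing (PQ (coad br x b) a) y
     + pairing (BQ (coad pr y b) a) x + pairing (PQ (coad br x a) b) y = 0)"

lemma E1_iff: "(\<forall>x y. delta (pr x y) + tens2 (br y) id (Delta x) - tens2 id (pr x) (delta y) + tens2 (br x) id (Delta y) - tens2 id (pr y) (delta x) = 0) \<longleftrightarrow> E1p"
  unfolding E1p_def tens_eq0_iff by (simp add: norm_simps orient algebra_simps eq_neg_iff_add_eq_0)

lemma E2_iff: "(\<forall>x y. Delta (br x y) - tens2 (pr y) id (delta x) - tens2 id (br x) (Delta y) + tens2 id (pr y) (delta x) - tens2 (br x) id (Delta y) = 0) \<longleftrightarrow> E2p"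
  unfolding E2p_def tens_eq0_iff by (simp add: norm_simps orient algebra_simps eq_neg_iff_add_eq_0)

lemma R1_iff: "(\<forall>x2 x1 y1. coad BQ x2 (pr x1 y1) = pr (coad BQ x2 x1) y1 + pr x1 (coad BQ x2 y1) - - coad PQ (coad br x1 x2) y1 - - coad PQ (coad br y1 x2) x1) \<longleftrightarrow> E1p"
  unfolding E1p_def vec_eq_iff_pair' by (simp add: norm_simps orient algebra_simps eq_neg_iff_add_eq_0) metis

lemma R4_iff: "(\<forall>x2 x1 y2. BQ x2 (- coad pr x1 y2) - coad br (- coad PQ y2 x1) x2 = - coad pr (coad BQ x2 x1) y2 - PQ (coad br x1 x2) y2 + - coad pr x1 (BQ x2 y2)) \<longleftrightarrow> E1p"
  unfolding E1p_def vec_eq_iff_pair by (simp add: norm_simps orient algebra_simps eq_neg_iff_add_eq_0) metis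

lemma R2_iff: "(\<forall>x1 x2 y2. coad br x1 (PQ x2 y2) = PQ (coad br x1 x2) y2 + PQ x2 (coad br x1 y2) - - coad pr (coad BQ x2 x1) y2 - - coad pr (coad BQ y2 x1) x2) \<longleftrightarrow> E2p"
  unfolding E2p_def vec_eq_iff_pair by (simp add: norm_simps orient algebra_simps eq_neg_iff_add_eq_0 neg_eq_iff_add) metis

lemma R3_iff: "(\<forall>x1 x2 y1. br x1 (- coad PQ x2 y1) - coad BQ (- coad pr y1 x2) x1 = - coad PQ (coad br x1 x2) y1 - pr (coad BQ x2 x1) y1 + - coad PQ x2 (br x1 y1)) \<longleftrightarrow> E2p"
  unfolding E2p_def vec_eq_iff_pair' by (simp add: norm_simps orient algebra_simps eq_neg_iff_add_eq_0 neg_eq_iff_add) metis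

end


lemma projl_inl[simp]: "projl (inl_v x) = x" by (simp add: projl_def inl_v_def)
lemma projr_inl[simp]: "projr (inl_v x) = 0" by (simp add: projr_def inl_v_def fun_eq_iff)
lemma projl_inr[simp]: "projl (inr_v x) = 0" by (simp add: projl_def inr_v_def fun_eq_iff)
lemma projr_inr[simp]: "projr (inr_v x) = x" by (simp add: projr_def inr_v_def)
lemma projl_add[simp]: "projl (u + v) = projl u + projl v" by (simp add: projl_def fun_eq_iff)
lemma projr_add[simp]: "projr (u + v) = projr u + projr v" by (simp add: projr_def fun_eq_iff)
lemma projl_diff[simp]: "projl (u - v) = projl u - projl v" by (simp add: projl_def fun_eq_iff)
lemma projr_diff[simp]: "projr (u - v) = projr u - projr v" by (simp add: projr_def fun_eq_iff)
lemma projl_neg[simp]: "projl (- u) = - projl u" by (simp add: projl_def fun_eq_iff)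
lemma projr_neg[simp]: "projr (- u) = - projr u" by (simp add: projr_def fun_eq_iff)
lemma projl_zero[simp]: "projl 0 = 0" by (simp add: projl_def fun_eq_iff)
lemma projr_zero[simp]: "projr 0 = 0" by (simp add: projr_def fun_eq_iff)
lemma projl_smult[simp]: "projl (smult_v c u) = smult_v c (projl u)" by (simp add: projl_def smult_v_def)
lemma projr_smult[simp]: "projr (smult_v c u) = smult_v c (projr u)" by (simp add: projr_def smult_v_def)

lemma proj_eqI: "projl u = projl v \<Longrightarrow> projr u = projr v \<Longrightarrow> u = v"
proof (rule ext)
  fix s assume "projl u = projl v" "projr u = projr v"
  then show "u s = v s" by (cases s) (auto simp: projl_def projr_def fun_eq_iff)
qed

lemma proj_eq_iff: "u = v \<longleftrightarrow> projl u = projl v \<and> projr u = projr v"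
  using proj_eqI by auto

lemma decomp: "(u::'i + 'j \<Rightarrow> 'k::field) = inl_v (projl u) + inr_v (projr u)"
  by (rule proj_eqI) simp_all

lemma inl_add: "inl_v ((x::'i \<Rightarrow> 'k::field) + y) = inl_v x + inl_v y" by (rule proj_eqI) simp_all
lemma inr_add: "inr_v ((x::'i \<Rightarrow> 'k::field) + y) = inr_v x + inr_v y" by (rule proj_eqI) simp_all
lemma inl_zero[simp]: "inl_v (0::'i \<Rightarrow> 'k::field) = 0" by (rule proj_eqI) simp_all
lemma inr_zero[simp]: "inr_v (0::'i \<Rightarrow> 'k::field) = 0" by (rule proj_eqI) simp_all

lemma pairing_sum_lr: "pairing (u::'n::finite + 'n \<Rightarrow> 'k::field) v = pairing (projl u) (projl v) + pairing (projr u) (projr v)"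
  by (simp add: pairing_def projl_def projr_def UNIV_Plus_UNIV[symmetric] sum.Plus del: UNIV_Plus_UNIV)


context
  fixes br pr :: "('n::finite \<Rightarrow> 'k::field_char_0) \<Rightarrow> ('n \<Rightarrow> 'k) \<Rightarrow> ('n \<Rightarrow> 'k)"
    and Delta delta :: "('n \<Rightarrow> 'k) \<Rightarrow> ('n \<Rightarrow> 'n \<Rightarrow> 'k)"
    and bS pS :: "('n + 'n \<Rightarrow> 'k) \<Rightarrow> ('n + 'n \<Rightarrow> 'k) \<Rightarrow> ('n + 'n \<Rightarrow> 'k)"
  assumes mpa: "malcev_poisson_alg br pr"
    and lD: "lin2 Delta" and ld: "lin2 delta"
    and mpd: "malcev_poisson_alg (dual_op delta) (dual_op Delta)"
    and bbS: "bilin bS" and bpS: "bilin pS"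
    and pv1: "\<And>x y. pS (inl_v x) (inl_v y) = inl_v (pr x y)"
    and pv2: "\<And>x \<eta>. pS (inl_v x) (inr_v \<eta>) = inl_v (- coad (dual_op Delta) \<eta> x) + inr_v (- coad pr x \<eta>)"
    and pv3: "\<And>\<xi> y. pS (inr_v \<xi>) (inl_v y) = inl_v (- coad (dual_op Delta) \<xi> y) + inr_v (- coad pr y \<xi>)"
    and pv4: "\<And>\<xi> \<eta>. pS (inr_v \<xi>) (inr_v \<eta>) = inr_v (dual_op Delta \<xi> \<eta>)"
    and bv1: "\<And>x y. bS (inl_v x) (inl_v y) = inl_v (br x y)"
    and bv2: "\<And>x \<eta>. bS (inl_v x) (inr_v \<eta>) = inl_v (- coad (dual_op delta) \<eta> x) + inr_v (coad br x \<eta>)"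
    and bv3: "\<And>\<xi> y. bS (inr_v \<xi>) (inl_v y) = inl_v (coad (dual_op delta) \<xi> y) + inr_v (- coad br y \<xi>)"
    and bv4: "\<And>\<xi> \<eta>. bS (inr_v \<xi>) (inr_v \<eta>) = inr_v (dual_op delta \<xi> \<eta>)"
begin

abbreviation "PR \<equiv> dual_op Delta"
abbreviation "BR \<equiv> dual_op delta"

lemmas AP8 = mpa_parts[OF mpa]
lemmas DP8 = mpa_parts[OF mpd]
lemmas bilins8 = AP8(3) AP8(2) DP8(3) DP8(2) bilin_coad[OF AP8(3)] bilin_coad[OF AP8(2)] bilin_coad[OF DP8(3)] bilin_coad[OF DP8(2)] bpS bbS
lemmas negs8 = bilins8[THEN bilin_negL] bilins8[THEN bilin_negR]
lemmas adds8 = bpS[THEN bilin_addL] bpS[THEN bilin_addR] bbS[THEN bilin_addL] bbS[THEN bilin_addR]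
  bilins8[THEN bilin_diffL] bilins8[THEN bilin_diffR]

lemma autos:
  "- coad pr (pr x y) v = - coad pr x (- coad pr y v)"
  "- coad PR (PR \<xi> \<eta>) w = - coad PR \<xi> (- coad PR \<eta> w)"
  "coad br (pr x y) v = - coad pr y (coad br x v) + - coad pr x (coad br y v)"
  "- coad pr (br x y) v = coad br x (- coad pr y v) - - coad pr y (coad br x v)"
  "coad BR (PR \<xi> \<eta>) w = - coad PR \<eta> (coad BR \<xi> w) + - coad PR \<xi> (coad BR \<eta> w)"
  "- coad PR (BR \<xi> \<eta>) w = coad BR \<xi> (- coad PR \<eta> w) - - coad PR \<eta> (coad BR \<xi> w)"
  using mp_rep_auto[OF mpa] mp_rep_auto[OF mpd] unfolding mp_rep_def assoc_rep_def by blast+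

lemma comm_mu: "coad pr y (coad pr x \<xi>) = coad pr x (coad pr y \<xi>)"
  "coad PR \<eta> (coad PR \<xi> z) = coad PR \<xi> (coad PR \<eta> z)"
proof -
  have "coad pr y (coad pr x \<xi>) = - coad pr (pr y x) \<xi>" using autos(1)[of y x \<xi>] by (simp add: negs8)
  also have "\<dots> = - coad pr (pr x y) \<xi>" using AP8(5)[of x y] by simp
  also have "\<dots> = coad pr x (coad pr y \<xi>)" using autos(1)[of x y \<xi>] by (simp add: negs8)
  finally show "coad pr y (coad pr x \<xi>) = coad pr x (coad pr y \<xi>)" .
  have "coad PR \<eta> (coad PR \<xi> z) = - coad PR (PR \<eta> \<xi>) z" using autos(2)[of \<eta> \<xi> z] by (simp add: negs8)
  also have "\<dots> = - coad PR (PR \<xi> \<eta>) z" using DP8(5)[of \<xi> \<eta>] by simp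
  also have "\<dots> = coad PR \<xi> (coad PR \<eta> z)" using autos(2)[of \<xi> \<eta> z] by (simp add: negs8)
  finally show "coad PR \<eta> (coad PR \<xi> z) = coad PR \<xi> (coad PR \<eta> z)" .
qed

lemma a_llr: "pS (pS (inl_v x) (inl_v y)) (inr_v z) = pS (inl_v x) (pS (inl_v y) (inr_v z)) \<longleftrightarrow>
   - coad PR z (pr y x) = pr (- coad PR z y) x + - coad PR (- coad pr y z) x"
  by (simp add: proj_eq_iff pv1 pv2 pv3 pv4 adds8 negs8 autos AP8(5) DP8(5) algebra_simps)

lemma a_rrl: "pS (pS (inr_v \<xi>) (inr_v \<eta>)) (inl_v z) = pS (inr_v \<xi>) (pS (inr_v \<eta>) (inl_v z)) \<longleftrightarrow>
   - coad pr z (PR \<eta> \<xi>) = PR (- coad pr z \<eta>) \<xi> + - coad pr (- coad PR \<eta> z) \<xi>"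
  by (simp add: proj_eq_iff pv1 pv2 pv3 pv4 bv1 bv2 bv3 bv4 adds8 negs8 autos AP8(5) DP8(5) algebra_simps comm_mu)

lemma a_rll: "pS (pS (inr_v \<xi>) (inl_v x)) (inl_v y) = pS (inr_v \<xi>) (pS (inl_v x) (inl_v y)) \<longleftrightarrow>
   - coad PR \<xi> (pr x y) = pr (- coad PR \<xi> x) y + - coad PR (- coad pr x \<xi>) y"
  by (simp add: proj_eq_iff pv1 pv2 pv3 pv4 bv1 bv2 bv3 bv4 adds8 negs8 autos AP8(5) DP8(5) algebra_simps comm_mu) metis

lemma a_lrr: "pS (pS (inl_v x) (inr_v \<xi>)) (inr_v \<eta>) = pS (inl_v x) (pS (inr_v \<xi>) (inr_v \<eta>)) \<longleftrightarrow>
   - coad pr x (PR \<xi> \<eta>) = PR (- coad pr x \<xi>) \<eta> + - coad pr (- coad PR \<xi> x) \<eta>"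
  by (simp add: proj_eq_iff pv1 pv2 pv3 pv4 bv1 bv2 bv3 bv4 adds8 negs8 autos AP8(5) DP8(5) algebra_simps comm_mu) metis

lemma l_llr: "bS (inl_v x) (pS (inl_v y) (inr_v \<zeta>)) = pS (bS (inl_v x) (inl_v y)) (inr_v \<zeta>) + pS (inl_v y) (bS (inl_v x) (inr_v \<zeta>)) \<longleftrightarrow>
   br x (- coad PR \<zeta> y) - coad BR (- coad pr y \<zeta>) x = - coad PR (coad br x \<zeta>) y - pr (coad BR \<zeta> x) y + - coad PR \<zeta> (br x y)"
  by (simp add: proj_eq_iff pv1 pv2 pv3 pv4 bv1 bv2 bv3 bv4 adds8 negs8 autos AP8(5) DP8(5) algebra_simps)

lemma l_lrl: "bS (inl_v x) (pS (inr_v \<zeta>) (inl_v y)) = pS (bS (inl_v x) (inr_v \<zeta>)) (inl_v y) + pS (inr_v \<zeta>) (bS (inl_v x) (inl_v y)) \<longleftrightarrow>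
   br x (- coad PR \<zeta> y) - coad BR (- coad pr y \<zeta>) x = - coad PR (coad br x \<zeta>) y - pr (coad BR \<zeta> x) y + - coad PR \<zeta> (br x y)"
  by (simp add: proj_eq_iff pv1 pv2 pv3 pv4 bv1 bv2 bv3 bv4 adds8 negs8 autos AP8(5) DP8(5) algebra_simps)

lemma l_lrr: "bS (inl_v x) (pS (inr_v \<xi>) (inr_v \<eta>)) = pS (bS (inl_v x) (inr_v \<xi>)) (inr_v \<eta>) + pS (inr_v \<xi>) (bS (inl_v x) (inr_v \<eta>)) \<longleftrightarrow>
   coad br x (PR \<xi> \<eta>) = PR (coad br x \<xi>) \<eta> + PR \<xi> (coad br x \<eta>) - - coad pr (coad BR \<xi> x) \<eta> - - coad pr (coad BR \<eta> x) \<xi>"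
  by (simp add: proj_eq_iff pv1 pv2 pv3 pv4 bv1 bv2 bv3 bv4 adds8 negs8 autos AP8(5) DP8(5) algebra_simps)

lemma l_rll: "bS (inr_v \<xi>) (pS (inl_v x) (inl_v y)) = pS (bS (inr_v \<xi>) (inl_v x)) (inl_v y) + pS (inl_v x) (bS (inr_v \<xi>) (inl_v y)) \<longleftrightarrow>
   coad BR \<xi> (pr x y) = pr (coad BR \<xi> x) y + pr x (coad BR \<xi> y) - - coad PR (coad br x \<xi>) y - - coad PR (coad br y \<xi>) x"
  by (simp add: proj_eq_iff pv1 pv2 pv3 pv4 bv1 bv2 bv3 bv4 adds8 negs8 autos AP8(5) DP8(5) algebra_simps)

lemma l_rlr: "bS (inr_v \<xi>) (pS (inl_v x) (inr_v \<eta>)) = pS (bS (inr_v \<xi>) (inl_v x)) (inr_v \<eta>) + pS (inl_v x) (bS (inr_v \<xi>) (inr_v \<eta>)) \<longleftrightarrow>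
   BR \<xi> (- coad pr x \<eta>) - coad br (- coad PR \<eta> x) \<xi> = - coad pr (coad BR \<xi> x) \<eta> - PR (coad br x \<xi>) \<eta> + - coad pr x (BR \<xi> \<eta>)"
  by (simp add: proj_eq_iff pv1 pv2 pv3 pv4 bv1 bv2 bv3 bv4 adds8 negs8 autos AP8(5) DP8(5) algebra_simps)

lemma l_rrl: "bS (inr_v \<xi>) (pS (inr_v \<eta>) (inl_v x)) = pS (bS (inr_v \<xi>) (inr_v \<eta>)) (inl_v x) + pS (inr_v \<eta>) (bS (inr_v \<xi>) (inl_v x)) \<longleftrightarrow>
   BR \<xi> (- coad pr x \<eta>) - coad br (- coad PR \<eta> x) \<xi> = - coad pr (coad BR \<xi> x) \<eta> - PR (coad br x \<xi>) \<eta> + - coad pr x (BR \<xi> \<eta>)"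
  by (simp add: proj_eq_iff pv1 pv2 pv3 pv4 bv1 bv2 bv3 bv4 adds8 negs8 autos AP8(5) DP8(5) algebra_simps)

lemma a_lll: "pS (pS (inl_v x) (inl_v y)) (inl_v z) = pS (inl_v x) (pS (inl_v y) (inl_v z))"
  by (simp add: pv1 AP8(6))
lemma a_rrr: "pS (pS (inr_v x) (inr_v y)) (inr_v z) = pS (inr_v x) (pS (inr_v y) (inr_v z))"
  by (simp add: pv4 DP8(6))
lemma l_lll: "bS (inl_v x) (pS (inl_v y) (inl_v z)) = pS (bS (inl_v x) (inl_v y)) (inl_v z) + pS (inl_v y) (bS (inl_v x) (inl_v z))"
  by (simp add: pv1 bv1 AP8(7) inl_add)
lemma l_rrr: "bS (inr_v x) (pS (inr_v y) (inr_v z)) = pS (bS (inr_v x) (inr_v y)) (inr_v z) + pS (inr_v y) (bS (inr_v x) (inr_v z))"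
  by (simp add: pv4 bv4 DP8(7) inr_add)

lemma pcomm_lr: "pS (inl_v x) (inr_v \<eta>) = pS (inr_v \<eta>) (inl_v x)"
  by (simp add: pv2 pv3)

lemma pS_comm: "pS u v = pS v u"
proof -
  have c1: "pS (inl_v x) (inl_v y) = pS (inl_v y) (inl_v x)" for x y by (simp add: pv1 AP8(5))
  have c4: "pS (inr_v x) (inr_v y) = pS (inr_v y) (inr_v x)" for x y by (simp add: pv4 DP8(5))
    obtain a b where u: "u = inl_v a + inr_v b" using decomp[of u] by blast
    obtain c d where v: "v = inl_v c + inr_v d" using decomp[of v] by blast
    show ?thesis unfolding u v
      apply (simp only: adds8)
      apply (simp only: c1[of a] c4[of b] pcomm_lr)
      by (simp add: add_ac)
qed

lemma a_lrl: "(\<forall>x2 x1 y1. - coad PR x2 (pr x1 y1) = pr (- coad PR x2 x1) y1 + - coad PR (- coad pr x1 x2) y1) \<Longrightarrow> pS (pS (inl_v x) (inr_v \<xi>)) (inl_v z) = pS (inl_v x) (pS (inr_v \<xi>) (inl_v z))"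
proof -
  assume M2: "\<forall>x2 x1 y1. - coad PR x2 (pr x1 y1) = pr (- coad PR x2 x1) y1 + - coad PR (- coad pr x1 x2) y1"
  have r1: "pS (pS (inr_v \<xi>) (inl_v x)) (inl_v z) = pS (inr_v \<xi>) (pS (inl_v x) (inl_v z))"
    using a_rll M2 by blast
  have r2: "pS (pS (inl_v x) (inl_v z)) (inr_v \<xi>) = pS (inl_v x) (pS (inl_v z) (inr_v \<xi>))"
    using a_llr M2 by blast
  have "pS (pS (inl_v x) (inr_v \<xi>)) (inl_v z) = pS (inr_v \<xi>) (pS (inl_v x) (inl_v z))"
    using r1 pcomm_lr by simp
  also have "\<dots> = pS (pS (inl_v x) (inl_v z)) (inr_v \<xi>)" by (simp add: pv1 pcomm_lr)
  also have "\<dots> = pS (inl_v x) (pS (inr_v \<xi>) (inl_v z))" using r2 pcomm_lr by simp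
  finally show ?thesis .
qed

lemma a_rlr: "(\<forall>x1 x2 y2. - coad pr x1 (PR x2 y2) = PR (- coad pr x1 x2) y2 + - coad pr (- coad PR x2 x1) y2) \<Longrightarrow> pS (pS (inr_v \<xi>) (inl_v x)) (inr_v \<eta>) = pS (inr_v \<xi>) (pS (inl_v x) (inr_v \<eta>))"
proof -
  assume M1: "\<forall>x1 x2 y2. - coad pr x1 (PR x2 y2) = PR (- coad pr x1 x2) y2 + - coad pr (- coad PR x2 x1) y2"
  have r1: "pS (pS (inl_v x) (inr_v \<xi>)) (inr_v \<eta>) = pS (inl_v x) (pS (inr_v \<xi>) (inr_v \<eta>))"
    using a_lrr M1 by blast
  have r2: "pS (pS (inr_v \<xi>) (inr_v \<eta>)) (inl_v x) = pS (inr_v \<xi>) (pS (inr_v \<eta>) (inl_v x))"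
    using a_rrl M1 by blast
  have "pS (pS (inr_v \<xi>) (inl_v x)) (inr_v \<eta>) = pS (inl_v x) (pS (inr_v \<xi>) (inr_v \<eta>))"
    using r1 pcomm_lr by simp
  also have "\<dots> = pS (pS (inr_v \<xi>) (inr_v \<eta>)) (inl_v x)" by (simp add: pv4 pcomm_lr)
  also have "\<dots> = pS (inr_v \<xi>) (pS (inl_v x) (inr_v \<eta>))" using r2 pcomm_lr by simp
  finally show ?thesis .
qed

lemma assoc_iff: "(\<forall>u v w. pS (pS u v) w = pS u (pS v w)) \<longleftrightarrow> (\<forall>x1 x2 y2. - coad pr x1 (PR x2 y2) = PR (- coad pr x1 x2) y2 + - coad pr (- coad PR x2 x1) y2) \<and> (\<forall>x2 x1 y1. - coad PR x2 (pr x1 y1) = pr (- coad PR x2 x1) y1 + - coad PR (- coad pr x1 x2) y1)"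
proof
  assume A: "\<forall>u v w. pS (pS u v) w = pS u (pS v w)"
  show "(\<forall>x1 x2 y2. - coad pr x1 (PR x2 y2) = PR (- coad pr x1 x2) y2 + - coad pr (- coad PR x2 x1) y2) \<and> (\<forall>x2 x1 y1. - coad PR x2 (pr x1 y1) = pr (- coad PR x2 x1) y1 + - coad PR (- coad pr x1 x2) y1)"
  proof (intro conjI allI)
    fix x1 x2 y2
    have h: "pS (pS (inl_v x1) (inr_v x2)) (inr_v y2) = pS (inl_v x1) (pS (inr_v x2) (inr_v y2))"
      by (rule A[rule_format])
    show "- coad pr x1 (PR x2 y2) = PR (- coad pr x1 x2) y2 + - coad pr (- coad PR x2 x1) y2"
      using a_lrr[of x1 x2 y2] h by (rule iffD1)
  next
    fix x2 x1 y1
    have h: "pS (pS (inl_v y1) (inl_v x1)) (inr_v x2) = pS (inl_v y1) (pS (inl_v x1) (inr_v x2))"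
      by (rule A[rule_format])
    show "- coad PR x2 (pr x1 y1) = pr (- coad PR x2 x1) y1 + - coad PR (- coad pr x1 x2) y1"
      using a_llr[of y1 x1 x2] h by (rule iffD1)
  qed
next
  assume C: "(\<forall>x1 x2 y2. - coad pr x1 (PR x2 y2) = PR (- coad pr x1 x2) y2 + - coad pr (- coad PR x2 x1) y2) \<and> (\<forall>x2 x1 y1. - coad PR x2 (pr x1 y1) = pr (- coad PR x2 x1) y1 + - coad PR (- coad pr x1 x2) y1)"
  then have M1: "\<forall>x1 x2 y2. - coad pr x1 (PR x2 y2) = PR (- coad pr x1 x2) y2 + - coad pr (- coad PR x2 x1) y2" and M2: "\<forall>x2 x1 y1. - coad PR x2 (pr x1 y1) = pr (- coad PR x2 x1) y1 + - coad PR (- coad pr x1 x2) y1" by blast+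
  note cs = a_lll a_rrr a_lrl[OF M2] a_rlr[OF M1]
    a_llr[THEN iffD2, OF M2[rule_format]] a_rrl[THEN iffD2, OF M1[rule_format]]
    a_rll[THEN iffD2, OF M2[rule_format]] a_lrr[THEN iffD2, OF M1[rule_format]]
  show "\<forall>u v w. pS (pS u v) w = pS u (pS v w)"
  proof (intro allI)
    fix u v w :: "'n + 'n \<Rightarrow> 'k"
      obtain a b where u: "u = inl_v a + inr_v b" using decomp[of u] by blast
      obtain c d where v: "v = inl_v c + inr_v d" using decomp[of v] by blast
      obtain e f where w: "w = inl_v e + inr_v f" using decomp[of w] by blast
      show "pS (pS u v) w = pS u (pS v w)" unfolding u v w
      apply (simp only: adds8)
      by (simp only: cs add_ac)
  qed
qed

lemma leib_iff: "(\<forall>u v w. bS u (pS v w) = pS (bS u v) w + pS v (bS u w)) \<longleftrightarrow> (\<forall>x2 x1 y1. coad BR x2 (pr x1 y1) = pr (coad BR x2 x1) y1 + pr x1 (coad BR x2 y1) - - coad PR (coad br x1 x2) y1 - - coad PR (coad br y1 x2) x1) \<and> (\<forall>x1 x2 y2. coad br x1 (PR x2 y2) = PR (coad br x1 x2) y2 + PR x2 (coad br x1 y2) - - coad pr (coad BR x2 x1) y2 - - coad pr (coad BR y2 x1) x2) \<and> (\<forall>x1 x2 y1. br x1 (- coad PR x2 y1) - coad BR (- coad pr y1 x2) x1 = - coad PR (coad br x1 x2) y1 - pr (coad BR x2 x1) y1 + - coad PR x2 (br x1 y1)) \<and> (\<forall>x2 x1 y2. BR x2 (- coad pr x1 y2)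 - coad br (- coad PR y2 x1) x2 = - coad pr (coad BR x2 x1) y2 - PR (coad br x1 x2) y2 + - coad pr x1 (BR x2 y2))"
proof
  assume A: "\<forall>u v w. bS u (pS v w) = pS (bS u v) w + pS v (bS u w)"
  show "(\<forall>x2 x1 y1. coad BR x2 (pr x1 y1) = pr (coad BR x2 x1) y1 + pr x1 (coad BR x2 y1) - - coad PR (coad br x1 x2) y1 - - coad PR (coad br y1 x2) x1) \<and> (\<forall>x1 x2 y2. coad br x1 (PR x2 y2) = PR (coad br x1 x2) y2 + PR x2 (coad br x1 y2) - - coad pr (coad BR x2 x1) y2 - - coad pr (coad BR y2 x1) x2) \<and> (\<forall>x1 x2 y1. br x1 (- coad PR x2 y1) - coad BR (- coad pr y1 x2) x1 = - coad PR (coad br x1 x2) y1 - pr (coad BR x2 x1) y1 + - coad PR x2 (br x1 y1)) \<and> (\<forall>x2 x1 y2. BR x2 (- coad pr x1 y2) - coad br (- coad PR y2 x1) x2 = - coad pr (coad BR x2 x1) y2 - PR (coad br x1 x2) y2 + - coad pr x1 (BR x2 y2))"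
    apply (intro conjI allI)
       apply (rule l_rll[THEN iffD1], rule A[rule_format])
      apply (rule l_lrr[THEN iffD1], rule A[rule_format])
     apply (rule l_llr[THEN iffD1], rule A[rule_format])
    apply (rule l_rlr[THEN iffD1], rule A[rule_format])
    done
next
  assume C: "(\<forall>x2 x1 y1. coad BR x2 (pr x1 y1) = pr (coad BR x2 x1) y1 + pr x1 (coad BR x2 y1) - - coad PR (coad br x1 x2) y1 - - coad PR (coad br y1 x2) x1) \<and> (\<forall>x1 x2 y2. coad br x1 (PR x2 y2) = PR (coad br x1 x2) y2 + PR x2 (coad br x1 y2) - - coad pr (coad BR x2 x1) y2 - - coad pr (coad BR y2 x1) x2) \<and> (\<forall>x1 x2 y1. br x1 (- coad PR x2 y1) - coad BR (- coad pr y1 x2) x1 = - coad PR (coad br x1 x2) y1 - pr (coad BR x2 x1) y1 + - coad PR x2 (br x1 y1)) \<and> (\<forall>x2 x1 y2. BR x2 (- coad pr x1 y2) - coad br (- coad PR y2 x1) x2 = - coad pr (coad BR x2 x1) y2 - PR (coad br x1 x2) y2 + - coad pr x1 (BR x2 y2))"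
  then have R1: "\<forall>x2 x1 y1. coad BR x2 (pr x1 y1) = pr (coad BR x2 x1) y1 + pr x1 (coad BR x2 y1) - - coad PR (coad br x1 x2) y1 - - coad PR (coad br y1 x2) x1" and R2: "\<forall>x1 x2 y2. coad br x1 (PR x2 y2) = PR (coad br x1 x2) y2 + PR x2 (coad br x1 y2) - - coad pr (coad BR x2 x1) y2 - - coad pr (coad BR y2 x1) x2" and R3: "\<forall>x1 x2 y1. br x1 (- coad PR x2 y1) - coad BR (- coad pr y1 x2) x1 = - coad PR (coad br x1 x2) y1 - pr (coad BR x2 x1) y1 + - coad PR x2 (br x1 y1)" and R4: "\<forall>x2 x1 y2. BR x2 (- coad pr x1 y2) - coad br (- coad PR y2 x1) x2 = - coad pr (coad BR x2 x1) y2 - PR (coad br x1 x2) y2 + - coad pr x1 (BR x2 y2)" by blast+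
  note cs = l_lll l_rrr
    l_llr[THEN iffD2, OF R3[rule_format]] l_lrl[THEN iffD2, OF R3[rule_format]]
    l_lrr[THEN iffD2, OF R2[rule_format]] l_rll[THEN iffD2, OF R1[rule_format]]
    l_rlr[THEN iffD2, OF R4[rule_format]] l_rrl[THEN iffD2, OF R4[rule_format]]
  show "\<forall>u v w. bS u (pS v w) = pS (bS u v) w + pS v (bS u w)"
  proof (intro allI)
    fix u v w :: "'n + 'n \<Rightarrow> 'k"
      obtain a b where u: "u = inl_v a + inr_v b" using decomp[of u] by blast
      obtain c d where v: "v = inl_v c + inr_v d" using decomp[of v] by blast
      obtain e f where w: "w = inl_v e + inr_v f" using decomp[of w] by blast
      show "bS u (pS v w) = pS (bS u v) w + pS v (bS u w)" unfolding u v w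
      apply (simp only: adds8)
      by (simp only: cs add_ac)
  qed
qed

lemma mpaS_iff: "malcev_poisson_alg bS pS \<longleftrightarrow> malcev_alg bS \<and> ((\<forall>x1 x2 y2. - coad pr x1 (PR x2 y2) = PR (- coad pr x1 x2) y2 + - coad pr (- coad PR x2 x1) y2) \<and> (\<forall>x2 x1 y1. - coad PR x2 (pr x1 y1) = pr (- coad PR x2 x1) y1 + - coad PR (- coad pr x1 x2) y1)) \<and>
   ((\<forall>x2 x1 y1. coad BR x2 (pr x1 y1) = pr (coad BR x2 x1) y1 + pr x1 (coad BR x2 y1) - - coad PR (coad br x1 x2) y1 - - coad PR (coad br y1 x2) x1) \<and> (\<forall>x1 x2 y2. coad br x1 (PR x2 y2) = PR (coad br x1 x2) y2 + PR x2 (coad br x1 y2) - - coad pr (coad BR x2 x1) y2 - - coad pr (coad BR y2 x1) x2) \<and> (\<forall>x1 x2 y1. br x1 (- coad PR x2 y1) - coad BR (- coad pr y1 x2) x1 = - coad PR (coad br x1 x2) y1 - pr (coad BR x2 x1) y1 + - coad PR x2 (br x1 y1)) \<and> (\<forall>x2 x1 y2. BR x2 (- coad pr x1 y2) - coad br (- coad PR y2 x1) x2 = - coad pr (coad BR x2 x1) y2 - PR (coad br x1 x2) y2 + - coad pr x1 (BR x2 y2)))"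
  unfolding malcev_poisson_alg_def assoc_iff[symmetric] leib_iff[symmetric] using bpS pS_comm by blast

end


definition dprod :: "(('n::finite \<Rightarrow> 'k::field) \<Rightarrow> ('n \<Rightarrow> 'k) \<Rightarrow> ('n \<Rightarrow> 'k)) \<Rightarrow> (('n \<Rightarrow> 'k) \<Rightarrow> ('n \<Rightarrow> 'k) \<Rightarrow> ('n \<Rightarrow> 'k))
   \<Rightarrow> ('n + 'n \<Rightarrow> 'k) \<Rightarrow> ('n + 'n \<Rightarrow> 'k) \<Rightarrow> ('n + 'n \<Rightarrow> 'k)" where
  "dprod mul mulD u v = inl_v (mul (projl u) (projl v) + - coad mulD (projr u) (projl v) + - coad mulD (projr v) (projl u))
     + inr_v (mulD (projr u) (projr v) + - coad mul (projl u) (projr v) + - coad mul (projl v) (projr u))"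

lemma smult_add: "smult_v c (a + b) = smult_v c a + smult_v c b" by (simp add: smult_v_def fun_eq_iff algebra_simps)
lemma smult_neg: "smult_v c (- a) = - smult_v c a" by (simp add: smult_v_def fun_eq_iff)
lemma smult_diff: "smult_v c (a - b) = smult_v c a - smult_v c b" by (simp add: smult_v_def fun_eq_iff algebra_simps)
lemma smult_zero: "smult_v c 0 = (0::'i \<Rightarrow> 'k::field)" by (simp add: smult_v_def fun_eq_iff)
lemma inl_smult: "inl_v (smult_v c (x::'i \<Rightarrow> 'k::field)) = smult_v c (inl_v x)"
  by (rule proj_eqI) (simp_all add: smult_zero)
lemma inr_smult: "inr_v (smult_v c (x::'i \<Rightarrow> 'k::field)) = smult_v c (inr_v x)"
  by (rule proj_eqI) (simp_all add: smult_zero)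

lemma inl_neg: "inl_v (- (x::'i \<Rightarrow> 'k::field)) = - inl_v x" by (rule proj_eqI) simp_all
lemma inr_neg: "inr_v (- (x::'i \<Rightarrow> 'k::field)) = - inr_v x" by (rule proj_eqI) simp_all

lemma omega_inl: "omega_d s (inl_v y) = pairing (projr s) y" by (simp add: omega_d_def)
lemma omega_inr: "omega_d s (inr_v y) = pairing (projl s) y" by (simp add: omega_d_def)
lemma omega_inl': "omega_d (inl_v x) s = pairing x (projr s)" by (simp add: omega_d_def)
lemma omega_inr': "omega_d (inr_v x) s = pairing x (projl s)" by (simp add: omega_d_def)


context
  fixes br pr :: "('n::finite \<Rightarrow> 'k::field_char_0) \<Rightarrow> ('n \<Rightarrow> 'k) \<Rightarrow> ('n \<Rightarrow> 'k)"
    and Delta delta :: "('n \<Rightarrow> 'k) \<Rightarrow> ('n \<Rightarrow> 'n \<Rightarrow> 'k)"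
  assumes mpa: "malcev_poisson_alg br pr"
    and lD: "lin2 Delta" and ld: "lin2 delta"
    and mpd: "malcev_poisson_alg (dual_op delta) (dual_op Delta)"
begin

abbreviation "PT \<equiv> dual_op Delta"
abbreviation "BT \<equiv> dual_op delta"
abbreviation "B2 \<equiv> mp_bracket br BT (coad br) (coad BT)"
abbreviation "P2 \<equiv> dprod pr PT"

lemmas AP9 = mpa_parts[OF mpa]
lemmas DP9 = mpa_parts[OF mpd]
lemmas bilins9 = AP9(3) AP9(2) DP9(3) DP9(2) bilin_coad[OF AP9(3)] bilin_coad[OF AP9(2)] bilin_coad[OF DP9(3)] bilin_coad[OF DP9(2)]
lemmas lops = bilins9[THEN bilin_negL] bilins9[THEN bilin_negR] bilins9[THEN bilin_addL] bilins9[THEN bilin_addR]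
  bilins9[THEN bilin_diffL] bilins9[THEN bilin_diffR] bilins9[THEN bilin_zeroL] bilins9[THEN bilin_zeroR]
  bilins9[THEN bilin_smultL] bilins9[THEN bilin_smultR]

lemma P2_vals:
  "P2 (inl_v x) (inl_v y) = inl_v (pr x y)"
  "P2 (inl_v x) (inr_v \<eta>) = inl_v (- coad PT \<eta> x) + inr_v (- coad pr x \<eta>)"
  "P2 (inr_v \<xi>) (inl_v y) = inl_v (- coad PT \<xi> y) + inr_v (- coad pr y \<xi>)"
  "P2 (inr_v \<xi>) (inr_v \<eta>) = inr_v (PT \<xi> \<eta>)"
  by (simp_all add: dprod_def lops)

lemma B2_vals:
  "B2 (inl_v x) (inl_v y) = inl_v (br x y)"
  "B2 (inl_v x) (inr_v \<eta>) = inl_v (- coad BT \<eta> x) + inr_v (coad br x \<eta>)"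
  "B2 (inr_v \<xi>) (inl_v y) = inl_v (coad BT \<xi> y) + inr_v (- coad br y \<xi>)"
  "B2 (inr_v \<xi>) (inr_v \<eta>) = inr_v (BT \<xi> \<eta>)"
  by (simp_all add: mp_bracket_def lops)

lemma bilin_P2: "bilin P2"
  unfolding bilin_def lin_def
  by (auto intro!: proj_eqI simp: dprod_def lops smult_add smult_neg smult_diff smult_zero algebra_simps inl_smult inr_smult)

lemma lins9: "lin (pr z)" "lin (br z)" "lin (PT z)" "lin (BT z)"
  using AP9(2,3) DP9(2,3) by (simp_all add: bilin_def)

lemma inv_P2: "omega_d (P2 u v) w = omega_d u (P2 v w)"
  by (simp add: omega_d_def dprod_def coad_pair coad_pair' lins9 pairing_comm AP9(5) DP9(5) algebra_simps)

lemma inv_B2: "omega_d (B2 u v) w = omega_d u (B2 v w)"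
  by (simp add: omega_d_def mp_bracket_def coad_pair coad_pair' lins9 pairing_comm algebra_simps
     AP9(4)[of "projl v" "projl u"] AP9(4)[of "projl w" "projl u"] DP9(4)[of "projr w" "projr u"] DP9(4)[of "projr v" "projr u"])

lemma manin_vals:
  assumes mp: "malcev_poisson_alg brS prS"
    and sub1: "\<forall>x y. brS (inl_v x) (inl_v y) = inl_v (br x y) \<and> prS (inl_v x) (inl_v y) = inl_v (pr x y)"
    and sub2: "\<forall>xi eta. brS (inr_v xi) (inr_v eta) = inr_v (BT xi eta) \<and> prS (inr_v xi) (inr_v eta) = inr_v (PT xi eta)"
    and invP: "\<forall>u v w. omega_d (prS u v) w = omega_d u (prS v w)"
    and invB: "\<forall>u v w. omega_d (brS u v) w = omega_d u (brS v w)"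
  shows "prS (inl_v x) (inr_v \<eta>) = inl_v (- coad PT \<eta> x) + inr_v (- coad pr x \<eta>)"
    and "brS (inl_v x) (inr_v \<eta>) = inl_v (- coad BT \<eta> x) + inr_v (coad br x \<eta>)"
proof -
  note S = mpa_parts[OF mp]
  show "prS (inl_v x) (inr_v \<eta>) = inl_v (- coad PT \<eta> x) + inr_v (- coad pr x \<eta>)"
  proof (rule proj_eqI)
    show "projl (prS (inl_v x) (inr_v \<eta>)) = projl (inl_v (- coad PT \<eta> x) + inr_v (- coad pr x \<eta>))"
    proof (rule vec_eqI_pair)
      fix z
      have "pairing (projl (prS (inl_v x) (inr_v \<eta>))) z = omega_d (prS (inl_v x) (inr_v \<eta>)) (inr_v z)"
        by (simp add: omega_inr)
      also have "\<dots> = omega_d (inl_v x) (prS (inr_v \<eta>) (inr_v z))" using invP by blast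
      also have "\<dots> = pairing x (PT \<eta> z)" using sub2 by (simp add: omega_inl')
      finally show "pairing (projl (prS (inl_v x) (inr_v \<eta>))) z = pairing (projl (inl_v (- coad PT \<eta> x) + inr_v (- coad pr x \<eta>))) z"
        by (simp add: coad_pair lins9)
    qed
    show "projr (prS (inl_v x) (inr_v \<eta>)) = projr (inl_v (- coad PT \<eta> x) + inr_v (- coad pr x \<eta>))"
    proof (rule vec_eqI_pair)
      fix y
      have "pairing (projr (prS (inl_v x) (inr_v \<eta>))) y = omega_d (prS (inr_v \<eta>) (inl_v x)) (inl_v y)"
        using S(5)[of "inl_v x" "inr_v \<eta>"] by (simp add: omega_inl)
      also have "\<dots> = omega_d (inr_v \<eta>) (prS (inl_v x) (inl_v y))" using invP by blast
      also have "\<dots> = pairing \<eta> (pr x y)" using sub1 by (simp add: omega_inr')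
      finally show "pairing (projr (prS (inl_v x) (inr_v \<eta>))) y = pairing (projr (inl_v (- coad PT \<eta> x) + inr_v (- coad pr x \<eta>))) y"
        by (simp add: coad_pair lins9)
    qed
  qed
  show "brS (inl_v x) (inr_v \<eta>) = inl_v (- coad BT \<eta> x) + inr_v (coad br x \<eta>)"
  proof (rule proj_eqI)
    show "projl (brS (inl_v x) (inr_v \<eta>)) = projl (inl_v (- coad BT \<eta> x) + inr_v (coad br x \<eta>))"
    proof (rule vec_eqI_pair)
      fix z
      have "pairing (projl (brS (inl_v x) (inr_v \<eta>))) z = omega_d (brS (inl_v x) (inr_v \<eta>)) (inr_v z)"
        by (simp add: omega_inr)
      also have "\<dots> = omega_d (inl_v x) (brS (inr_v \<eta>) (inr_v z))" using invB by blast
      also have "\<dots> = pairing x (BT \<eta> z)" using sub2 by (simp add: omega_inl')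
      finally show "pairing (projl (brS (inl_v x) (inr_v \<eta>))) z = pairing (projl (inl_v (- coad BT \<eta> x) + inr_v (coad br x \<eta>))) z"
        by (simp add: coad_pair lins9)
    qed
    show "projr (brS (inl_v x) (inr_v \<eta>)) = projr (inl_v (- coad BT \<eta> x) + inr_v (coad br x \<eta>))"
    proof (rule vec_eqI_pair)
      fix y
      have "pairing (projr (brS (inl_v x) (inr_v \<eta>))) y = - omega_d (brS (inr_v \<eta>) (inl_v x)) (inl_v y)"
        using S(4)[of "inl_v x" "inr_v \<eta>"] by (simp add: omega_inl)
      also have "\<dots> = - omega_d (inr_v \<eta>) (brS (inl_v x) (inl_v y))" using invB by simp
      also have "\<dots> = - pairing \<eta> (br x y)" using sub1 by (simp add: omega_inr')
      finally show "pairing (projr (brS (inl_v x) (inr_v \<eta>))) y = pairing (projr (inl_v (- coad BT \<eta> x) + inr_v (coad br x \<eta>))) y"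
        by (simp add: coad_pair lins9)
    qed
  qed
qed

lemma manin_iff: "std_manin_triple br pr BT PT \<longleftrightarrow> malcev_alg B2 \<and> ((\<forall>x1 x2 y2. - coad pr x1 (PT x2 y2) = PT (- coad pr x1 x2) y2 + - coad pr (- coad PT x2 x1) y2) \<and> (\<forall>x2 x1 y1. - coad PT x2 (pr x1 y1) = pr (- coad PT x2 x1) y1 + - coad PT (- coad pr x1 x2) y1)) \<and> ((\<forall>x2 x1 y1. coad BT x2 (pr x1 y1) = pr (coad BT x2 x1) y1 + pr x1 (coad BT x2 y1) - - coad PT (coad br x1 x2) y1 - - coad PT (coad br y1 x2) x1) \<and> (\<forall>x1 x2 y2. coad br x1 (PT x2 y2) = PT (coad br x1 x2) y2 + PT x2 (coad br x1 y2) - - coad pr (coad BT x2 x1) y2 - - coad pr (coad BT y2 x1) x2) \<and> (\<forall>x1 x2 y1. br x1 (- coad PT x2 y1) - coad BT (- coad pr y1 x2) x1 = - coad PT (coad br x1 x2) y1 - pr (coad BT x2 x1) y1 + - coad PT x2 (br x1 y1)) \<and> (\<forall>x2 x1 y2. BT x2 (- coad pr x1 y2) - coad br (- coad PT y2 x1) x2 = - coad pr (coad BT x2 x1) y2 - PT (coad br x1 x2) y2 + - coad pr x1 (BT x2 y2)))"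
proof
  assume "std_manin_triple br pr BT PT"
  then obtain brS prS where mp: "malcev_poisson_alg brS prS"
    and sub1: "\<forall>x y. brS (inl_v x) (inl_v y) = inl_v (br x y) \<and> prS (inl_v x) (inl_v y) = inl_v (pr x y)"
    and sub2: "\<forall>xi eta. brS (inr_v xi) (inr_v eta) = inr_v (BT xi eta) \<and> prS (inr_v xi) (inr_v eta) = inr_v (PT xi eta)"
    and invP: "\<forall>u v w. omega_d (prS u v) w = omega_d u (prS v w)"
    and invB: "\<forall>u v w. omega_d (brS u v) w = omega_d u (brS v w)"
    unfolding std_manin_triple_def by blast
  note S = mpa_parts[OF mp]
  note V = manin_vals[OF mp sub1 sub2 invP invB]
  have pv3: "prS (inr_v \<xi>) (inl_v y) = inl_v (- coad PT \<xi> y) + inr_v (- coad pr y \<xi>)" for \<xi> y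
    using S(5)[of "inr_v \<xi>" "inl_v y"] V(1)[of y \<xi>] by simp
  have bv3: "brS (inr_v \<xi>) (inl_v y) = inl_v (coad BT \<xi> y) + inr_v (- coad br y \<xi>)" for \<xi> y
    using S(4)[of "inr_v \<xi>" "inl_v y"] V(2)[of y \<xi>] by (simp add: inl_neg inr_neg)
  have G: "malcev_poisson_alg brS prS \<longleftrightarrow> malcev_alg brS \<and> ((\<forall>x1 x2 y2. - coad pr x1 (PT x2 y2) = PT (- coad pr x1 x2) y2 + - coad pr (- coad PT x2 x1) y2) \<and> (\<forall>x2 x1 y1. - coad PT x2 (pr x1 y1) = pr (- coad PT x2 x1) y1 + - coad PT (- coad pr x1 x2) y1)) \<and> ((\<forall>x2 x1 y1. coad BT x2 (pr x1 y1) = pr (coad BT x2 x1) y1 + pr x1 (coad BT x2 y1) - - coad PT (coad br x1 x2) y1 - - coad PT (coad br y1 x2) x1) \<and> (\<forall>x1 x2 y2. coad br x1 (PT x2 y2) = PT (coad br x1 x2) y2 + PT x2 (coad br x1 y2) - - coad pr (coad BT x2 x1) y2 - - coad pr (coad BT y2 x1) x2) \<and> (\<forall>x1 x2 y1. br x1 (- coad PT x2 y1) - coad BT (- coad pr y1 x2) x1 = - coad PT (coad br x1 x2) y1 - pr (coad BT x2 x1) y1 + - coad PT x2 (br x1 y1)) \<and> (\<forall>x2 x1 y2. BT x2 (- coad pr x1 y2) - coad br (- coad PT y2 x1) x2 = - coad pr (coad BT x2 x1) y2 - PT (coad br x1 x2) y2 + - coad pr x1 (BT x2 y2)))"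
    by (rule mpaS_iff[OF mpa lD ld mpd S(2) S(3)]) (use sub1 sub2 V pv3 bv3 in auto)
  have eqB: "brS = B2"
  proof (intro ext)
    fix u v :: "'n + 'n \<Rightarrow> 'k"
    obtain a b where u: "u = inl_v a + inr_v b" using decomp[of u] by blast
    obtain c d where v: "v = inl_v c + inr_v d" using decomp[of v] by blast
    have "brS u v = B2 u v" unfolding u v
      using sub1 sub2 V(2) bv3
      by (intro proj_eqI) (simp_all add: S(2)[THEN bilin_addL] S(2)[THEN bilin_addR] mp_bracket_def lops)
    then show "\<And>s. brS u v s = B2 u v s" by simp
  qed
  show "malcev_alg B2 \<and> ((\<forall>x1 x2 y2. - coad pr x1 (PT x2 y2) = PT (- coad pr x1 x2) y2 + - coad pr (- coad PT x2 x1) y2) \<and> (\<forall>x2 x1 y1. - coad PT x2 (pr x1 y1) = pr (- coad PT x2 x1) y1 + - coad PT (- coad pr x1 x2) y1)) \<and> ((\<forall>x2 x1 y1. coad BT x2 (pr x1 y1) = pr (coad BT x2 x1) y1 + pr x1 (coad BT x2 y1) - - coad PT (coad br x1 x2) y1 - - coad PT (coad br y1 x2) x1) \<and> (\<forall>x1 x2 y2. coad br x1 (PT x2 y2) = PT (coad br x1 x2) y2 + PT x2 (coad br x1 y2) - - coad pr (coad BT x2 x1) y2 - - coad pr (coad BT y2 x1) x2) \<and> (\<forall>x1 x2 y1. br x1 (- coad PT x2 y1) - coad BT (- coad pr y1 x2) x1 = - coad PT (coad br x1 x2) y1 - pr (coad BT x2 x1) y1 + - coad PT x2 (br x1 y1))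 \<and> (\<forall>x2 x1 y2. BT x2 (- coad pr x1 y2) - coad br (- coad PT y2 x1) x2 = - coad pr (coad BT x2 x1) y2 - PT (coad br x1 x2) y2 + - coad pr x1 (BT x2 y2)))" using G mp eqB by simp
next
  assume H: "malcev_alg B2 \<and> ((\<forall>x1 x2 y2. - coad pr x1 (PT x2 y2) = PT (- coad pr x1 x2) y2 + - coad pr (- coad PT x2 x1) y2) \<and> (\<forall>x2 x1 y1. - coad PT x2 (pr x1 y1) = pr (- coad PT x2 x1) y1 + - coad PT (- coad pr x1 x2) y1)) \<and> ((\<forall>x2 x1 y1. coad BT x2 (pr x1 y1) = pr (coad BT x2 x1) y1 + pr x1 (coad BT x2 y1) - - coad PT (coad br x1 x2) y1 - - coad PT (coad br y1 x2) x1) \<and> (\<forall>x1 x2 y2. coad br x1 (PT x2 y2) = PT (coad br x1 x2) y2 + PT x2 (coad br x1 y2) - - coad pr (coad BT x2 x1) y2 - - coad pr (coad BT y2 x1) x2) \<and> (\<forall>x1 x2 y1. br x1 (- coad PT x2 y1) - coad BT (- coad pr y1 x2) x1 = - coad PT (coad br x1 x2) y1 - pr (coad BT x2 x1) y1 + - coad PT x2 (br x1 y1)) \<and> (\<forall>x2 x1 y2. BT x2 (- coad pr x1 y2) - coad br (- coad PT y2 x1) x2 = - coad pr (coad BT x2 x1) y2 - PT (coad br x1 x2) y2 + - coad pr x1 (BT x2 y2)))"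
  have bB: "bilin B2" using H unfolding malcev_alg_def by blast
  have G: "malcev_poisson_alg B2 P2 \<longleftrightarrow> malcev_alg B2 \<and> ((\<forall>x1 x2 y2. - coad pr x1 (PT x2 y2) = PT (- coad pr x1 x2) y2 + - coad pr (- coad PT x2 x1) y2) \<and> (\<forall>x2 x1 y1. - coad PT x2 (pr x1 y1) = pr (- coad PT x2 x1) y1 + - coad PT (- coad pr x1 x2) y1)) \<and> ((\<forall>x2 x1 y1. coad BT x2 (pr x1 y1) = pr (coad BT x2 x1) y1 + pr x1 (coad BT x2 y1) - - coad PT (coad br x1 x2) y1 - - coad PT (coad br y1 x2) x1) \<and> (\<forall>x1 x2 y2. coad br x1 (PT x2 y2) = PT (coad br x1 x2) y2 + PT x2 (coad br x1 y2) - - coad pr (coad BT x2 x1) y2 - - coad pr (coad BT y2 x1) x2) \<and> (\<forall>x1 x2 y1. br x1 (- coad PT x2 y1) - coad BT (- coad pr y1 x2) x1 = - coad PT (coad br x1 x2) y1 - pr (coad BT x2 x1) y1 + - coad PT x2 (br x1 y1)) \<and> (\<forall>x2 x1 y2. BT x2 (- coad pr x1 y2) - coad br (- coad PT y2 x1) x2 = - coad pr (coad BT x2 x1) y2 - PT (coad br x1 x2) y2 + - coad pr x1 (BT x2 y2)))"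
    by (rule mpaS_iff[OF mpa lD ld mpd bB bilin_P2]) (simp_all add: P2_vals B2_vals)
  show "std_manin_triple br pr BT PT"
    unfolding std_manin_triple_def
    apply (rule exI[of _ B2], rule exI[of _ P2])
    using G H inv_P2 inv_B2 by (simp add: P2_vals B2_vals)
qed

end


theorem mainTheorem4:
  fixes br pr :: "('n::finite \<Rightarrow> 'k::{alg_closed_field, field_char_0}) \<Rightarrow> ('n \<Rightarrow> 'k) \<Rightarrow> ('n \<Rightarrow> 'k)"
    and Delta delta :: "('n \<Rightarrow> 'k) \<Rightarrow> ('n \<Rightarrow> 'n \<Rightarrow> 'k)"
  assumes "malcev_poisson_alg br pr"
    and "lin2 Delta" and "lin2 delta"
    and "malcev_poisson_alg (dual_op delta) (dual_op Delta)"
  shows "(mp_bialg br pr Delta delta \<longleftrightarrow>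
           matched_pair br pr (dual_op delta) (dual_op Delta)
             (coad br) (\<lambda>x xi. - coad pr x xi)
             (coad (dual_op delta)) (\<lambda>xi x. - coad (dual_op Delta) xi x))
       \<and> (mp_bialg br pr Delta delta \<longleftrightarrow>
           std_manin_triple br pr (dual_op delta) (dual_op Delta))"
proof -
  note mpa = assms(1) and lD = assms(2) and ld = assms(3) and mpd = assms(4)
  note AP = mpa_parts[OF mpa] and DP = mpa_parts[OF mpd]
  have r1: "malcev_rep br (coad br)" by (rule coad_rep[OF AP(1)])
  have r2: "malcev_rep (dual_op delta) (coad (dual_op delta))" by (rule coad_rep[OF DP(1)])
  have a1: "assoc_rep pr (\<lambda>x xi. - coad pr x xi)" by (rule assoc_rep_auto[OF mpa])
  have a2: "assoc_rep (dual_op Delta) (\<lambda>x xi. - coad (dual_op Delta) x xi)" by (rule assoc_rep_auto[OF mpd])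
  have m1: "mp_rep br pr (coad br) (\<lambda>x xi. - coad pr x xi)" by (rule mp_rep_auto[OF mpa])
  have m2: "mp_rep (dual_op delta) (dual_op Delta) (coad (dual_op delta)) (\<lambda>x xi. - coad (dual_op Delta) x xi)"
    by (rule mp_rep_auto[OF mpd])
  have co: "mp_coalg Delta delta" by (rule coalg[OF lD ld mpd])
  note I = C_iff[OF mpa lD ld mpd] M1_iff[OF mpa lD ld mpd] M2_iff[OF mpa lD ld mpd]
    E1_iff[OF mpa lD ld mpd] E2_iff[OF mpa lD ld mpd] R1_iff[OF mpa lD ld mpd] R2_iff[OF mpa lD ld mpd]
    R3_iff[OF mpa lD ld mpd] R4_iff[OF mpa lD ld mpd]
  note MN = manin_iff[OF mpa lD ld mpd]
  show ?thesis
    unfolding mp_bialg_def malcev_bialg_def matched_pair_def MN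
    using mpa mpd r1 r2 a1 a2 m1 m2 co
    by (simp only: I simp_thms) blast
qed


end
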